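(* The Muchnik degrees of pandemic numberings and of hyperimmune sets coincide: for every oracle $X\subseteq\omega$, $X$ computes a pandemic numbering if and only if $X$ computes a hyperimmune set.
   Context: A numbering of the finite subsets of $\omega$ is a map $e\mapsto D_e$ from $\omega$ onto the finite subsets of $\omega$; an oracle $X$ computes such a numbering if the relation $\{(e,x): x\in D_e\}$ and the function $e\mapsto\max D_e$ (equivalently, $e\mapsto$ a canonical code of $D_e$) are $X$-computable. An order function is a recursive, nondecreasing, unbounded $h:\omega\to\omega$ with $h(0)\ge2$. For a numbering $D$ and $R\subseteq\omega$, $D$ is $h$-endemic to $R$ if there are infinitely many $e$ with $|D_e|\ge h(e)$ and $D_e\subseteq R$. $D$ is a pandemic numbering if there is an order function $h$ such that $D$ is $h$-endemic to every infinite recursive set $R$. A set $H\subseteq\omega$ is hyperimmune if it is infinite and the function enumerating its elements in increasing order is not dominated by any recursive function. *)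

theory Defs
  imports Main "HOL-Library.Infinite_Set"
begin

text \<open>Kleene's characterisation of total
  recursive functions (basic functions, composition, primitive recursion,
  regular minimisation), relativised by adding the characteristic function (of X)
  of X as an initial function.\<close>

inductive rec_in :: "nat set \<Rightarrow> nat \<Rightarrow> (nat list \<Rightarrow> nat) \<Rightarrow> bool" for X :: "nat set" where
  zero: "rec_in X n (\<lambda>_. 0)"
| succ: "rec_in X 1 (\<lambda>xs. Suc (hd xs))"
| proj: "i < n \<Longrightarrow> rec_in X n (\<lambda>xs. xs ! i)"
| char_X: "rec_in X 1 (\<lambda>xs. if hd xs \<in> X then 1 else 0)"
| comp: "rec_in X m g \<Longrightarrow> length fs = m \<Longrightarrow> (\<forall>i<m. rec_in X n (fs ! i))
          \<Longrightarrow> rec_in X n (\<lambda>xs. g (map (\<lambda>f. f xs) fs))"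
| prim_rec: "rec_in X n g \<Longrightarrow> rec_in X (n + 2) h
          \<Longrightarrow> rec_in X (n + 1) (\<lambda>xs. rec_nat (g (tl xs)) (\<lambda>y r. h (y # r # tl xs)) (hd xs))"
| mu: "rec_in X (n + 1) g \<Longrightarrow> (\<forall>xs. length xs = n \<longrightarrow> (\<exists>y. g (y # xs) = 0))
          \<Longrightarrow> rec_in X n (\<lambda>xs. LEAST y. g (y # xs) = 0)"
| ext: "rec_in X n f \<Longrightarrow> (\<forall>xs. length xs = n \<longrightarrow> f' xs = f xs) \<Longrightarrow> rec_in X n f'"

definition computable_in :: "nat set \<Rightarrow> (nat \<Rightarrow> nat) \<Rightarrow> bool" where
  "computable_in X f \<longleftrightarrow> rec_in X 1 (\<lambda>xs. f (hd xs))"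

definition computable_set_in :: "nat set \<Rightarrow> nat set \<Rightarrow> bool" where
  "computable_set_in X A \<longleftrightarrow> computable_in X (\<lambda>x. if x \<in> A then 1 else 0)"

definition computable_rel_in :: "nat set \<Rightarrow> (nat \<Rightarrow> nat \<Rightarrow> bool) \<Rightarrow> bool" where
  "computable_rel_in X P \<longleftrightarrow> rec_in X 2 (\<lambda>xs. if P (xs ! 0) (xs ! 1) then 1 else 0)"

definition recursive_fun :: "(nat \<Rightarrow> nat) \<Rightarrow> bool" where
  "recursive_fun f \<longleftrightarrow> computable_in {} f"

definition recursive_set :: "nat set \<Rightarrow> bool" where
  "recursive_set A \<longleftrightarrow> computable_set_in {} A"

definition numbering :: "(nat \<Rightarrow> nat set) \<Rightarrow> bool" where
  "numbering D \<longleftrightarrow> range D = {A. finite A}"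

definition canon :: "nat set \<Rightarrow> nat" where
  "canon A = (\<Sum>x\<in>A. 2 ^ x)"

definition computes_numbering :: "nat set \<Rightarrow> (nat \<Rightarrow> nat set) \<Rightarrow> bool" where
  "computes_numbering X D \<longleftrightarrow>
     computable_rel_in X (\<lambda>e x. x \<in> D e) \<and> computable_in X (\<lambda>e. canon (D e))"

definition order_function :: "(nat \<Rightarrow> nat) \<Rightarrow> bool" where
  "order_function h \<longleftrightarrow> recursive_fun h \<and> mono h \<and> (\<forall>k. \<exists>n. k < h n) \<and> 2 \<le> h 0"

definition endemic :: "(nat \<Rightarrow> nat) \<Rightarrow> (nat \<Rightarrow> nat set) \<Rightarrow> nat set \<Rightarrow> bool" where
  "endemic h D R \<longleftrightarrow> infinite {e. h e \<le> card (D e) \<and> D e \<subseteq> R}"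

definition pandemic :: "(nat \<Rightarrow> nat set) \<Rightarrow> bool" where
  "pandemic D \<longleftrightarrow> (\<exists>h. order_function h \<and>
     (\<forall>R. infinite R \<and> recursive_set R \<longrightarrow> endemic h D R))"

definition dominates :: "(nat \<Rightarrow> nat) \<Rightarrow> (nat \<Rightarrow> nat) \<Rightarrow> bool" where
  "dominates f g \<longleftrightarrow> (\<exists>N. \<forall>n\<ge>N. g n \<le> f n)"

definition hyperimmune :: "nat set \<Rightarrow> bool" where
  "hyperimmune H \<longleftrightarrow> infinite H \<and>
     \<not> (\<exists>f. recursive_fun f \<and> dominates f (enumerate H))"

end

theory Submission
  imports Defs "HOL-Library.Nat_Bijection"
begin


lemma rec_ext: "rec_in X n f \<Longrightarrow> (\<And>xs. length xs = n \<Longrightarrow> f' xs = f xs) \<Longrightarrow> rec_in X n f'"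
  using rec_in.ext by blast

lemma rec_comp_list:
  assumes "rec_in X m g" "length fs = m" "\<And>i. i < m \<Longrightarrow> rec_in X n (fs ! i)"
  shows "rec_in X n (\<lambda>xs. g (map (\<lambda>f. f xs) fs))"
  using rec_in.comp assms by blast

lemma rec_comp1:
  assumes g: "rec_in X 1 (\<lambda>xs. g (xs!0))" and a: "rec_in X n a"
  shows "rec_in X n (\<lambda>xs. g (a xs))"
proof -
  have "rec_in X n (\<lambda>xs. (\<lambda>ys. g (ys!0)) (map (\<lambda>f. f xs) [a]))"
    by (rule rec_comp_list[OF g]) (use a in auto)
  then show ?thesis by simp
qed

lemma rec_comp2:
  assumes g: "rec_in X 2 (\<lambda>xs. g (xs!0) (xs!1))" and a: "rec_in X n a" and b: "rec_in X n b"
  shows "rec_in X n (\<lambda>xs. g (a xs) (b xs))"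
proof -
  have "rec_in X n (\<lambda>xs. (\<lambda>ys. g (ys!0) (ys!1)) (map (\<lambda>f. f xs) [a,b]))"
    by (rule rec_comp_list[OF g]) (use a b in \<open>auto simp: less_Suc_eq numeral_2_eq_2\<close>)
  then show ?thesis by simp
qed

lemma rec_proj: "i < n \<Longrightarrow> rec_in X n (\<lambda>xs. xs ! i)"
  by (rule rec_in.proj)

lemma rec_proj_drop: "k + i < n \<Longrightarrow> rec_in X n (\<lambda>xs. drop k xs ! i)"
  by (rule rec_ext[OF rec_in.proj[of "k+i"]]) auto

lemma hd1: "length xs = Suc 0 \<Longrightarrow> hd xs = xs!0" by (cases xs) auto

lemma rec_Suc1: "rec_in X 1 (\<lambda>xs. Suc (xs!0))"
  by (rule rec_ext[OF rec_in.succ]) (auto simp: hd1)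

lemma rec_Suc: "rec_in X n a \<Longrightarrow> rec_in X n (\<lambda>xs. Suc (a xs))"
  by (rule rec_comp1[OF rec_Suc1])

lemma rec_const: "rec_in X n (\<lambda>xs. c)"
proof (induction c)
  case 0 show ?case by (rule rec_in.zero)
next
  case (Suc c) show ?case by (rule rec_Suc[OF Suc])
qed

lemma rec_charX1: "rec_in X 1 (\<lambda>xs. if xs!0 \<in> X then 1 else 0)"
  by (rule rec_ext[OF rec_in.char_X]) (auto simp: hd1)

lemma rec_charX: "rec_in X n a \<Longrightarrow> rec_in X n (\<lambda>xs. if a xs \<in> X then 1 else 0)"
  by (rule rec_comp1[OF rec_charX1])

lemma rec_prim:
  assumes c: "rec_in X n c" and a: "rec_in X n a"
    and s: "rec_in X (Suc (Suc n)) (\<lambda>ys. s (ys!0) (ys!1) (drop 2 ys))"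
  shows "rec_in X n (\<lambda>xs. rec_nat (a xs) (\<lambda>y r. s y r xs) (c xs))"
proof -
  have s': "rec_in X (n + 2) (\<lambda>ys. s (ys!0) (ys!1) (drop 2 ys))" using s by simp
  have F: "rec_in X (n + 1) (\<lambda>zs. rec_nat (a (tl zs)) (\<lambda>y r. s y r (tl zs)) (hd zs))"
    using rec_in.prim_rec[OF a s'] by simp
  define fs where "fs = c # map (\<lambda>i xs. xs ! i) [0..<n]"
  have "rec_in X n (\<lambda>xs. (\<lambda>zs. rec_nat (a (tl zs)) (\<lambda>y r. s y r (tl zs)) (hd zs)) (map (\<lambda>f. f xs) fs))"
    apply (rule rec_comp_list[OF F])
     apply (simp add: fs_def)
    apply (case_tac i)
     apply (simp add: fs_def c)
    apply (auto simp: fs_def intro!: rec_proj)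
    done
  then show ?thesis
  proof (rule rec_ext)
    fix xs :: "nat list" assume "length xs = n"
    then have "map (\<lambda>i. xs!i) [0..<n] = xs" using map_nth by metis
    then show "rec_nat (a xs) (\<lambda>y r. s y r xs) (c xs) =
      (\<lambda>zs. rec_nat (a (tl zs)) (\<lambda>y r. s y r (tl zs)) (hd zs)) (map (\<lambda>f. f xs) fs)"
      by (simp add: fs_def o_def)
  qed
qed

definition rec_pred :: "nat set \<Rightarrow> nat \<Rightarrow> (nat list \<Rightarrow> bool) \<Rightarrow> bool" where
  "rec_pred X n P \<longleftrightarrow> rec_in X n (\<lambda>xs. if P xs then 1 else 0)"

lemma rec_add2: "rec_in X 2 (\<lambda>xs. xs!0 + xs!1)"
proof -
  have "rec_in X 2 (\<lambda>xs. rec_nat (xs!1) (\<lambda>y r. Suc r) (xs!0))"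
    by (rule rec_prim[where s="\<lambda>y r xs. Suc r"]) (auto intro!: rec_proj rec_Suc)
  moreover have "rec_nat b (\<lambda>y r. Suc r) a = a + b" for a b :: nat by (induction a) auto
  ultimately show ?thesis by simp
qed

lemma rec_add: "rec_in X n a \<Longrightarrow> rec_in X n b \<Longrightarrow> rec_in X n (\<lambda>xs. a xs + b xs)"
  by (rule rec_comp2[OF rec_add2])

lemma rec_pred2: "rec_in X 1 (\<lambda>xs. xs!0 - 1)"
proof -
  have "rec_in X 1 (\<lambda>xs. rec_nat 0 (\<lambda>y r. y) (xs!0))"
    by (rule rec_prim[where s="\<lambda>y r xs. y"]) (auto intro!: rec_proj rec_const)
  moreover have "rec_nat 0 (\<lambda>y r. y) a = a - 1" for a :: nat by (cases a) auto
  ultimately show ?thesis by simp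
qed

lemma rec_dec: "rec_in X n a \<Longrightarrow> rec_in X n (\<lambda>xs. a xs - 1)"
  by (rule rec_comp1[OF rec_pred2])

lemma rec_sub2: "rec_in X 2 (\<lambda>xs. xs!0 - xs!1)"
proof -
  have "rec_in X 2 (\<lambda>xs. rec_nat (xs!0) (\<lambda>y r. r - 1) (xs!1))"
    by (rule rec_prim[where s="\<lambda>y r xs. r - 1"]) (intro rec_dec rec_proj; simp)+
  moreover have "rec_nat a (\<lambda>y r. r - 1) b = a - b" for a b :: nat by (induction b) auto
  ultimately show ?thesis by simp
qed

lemma rec_sub: "rec_in X n a \<Longrightarrow> rec_in X n b \<Longrightarrow> rec_in X n (\<lambda>xs. a xs - b xs)"
  by (rule rec_comp2[OF rec_sub2])

lemma rec_mult2: "rec_in X 2 (\<lambda>xs. xs!0 * xs!1)"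
proof -
  have "rec_in X 2 (\<lambda>xs. rec_nat 0 (\<lambda>y r. r + xs!1) (xs!0))"
    by (rule rec_prim[where s="\<lambda>y r xs. r + xs!1"]) (auto intro!: rec_proj rec_add rec_const rec_proj_drop)
  moreover have "rec_nat 0 (\<lambda>y r. r + b) a = a * b" for a b :: nat by (induction a) auto
  ultimately show ?thesis by simp
qed

lemma rec_mult: "rec_in X n a \<Longrightarrow> rec_in X n b \<Longrightarrow> rec_in X n (\<lambda>xs. a xs * b xs)"
  by (rule rec_comp2[OF rec_mult2])


lemma rec_if_raw: "rec_pred X n P \<Longrightarrow> rec_in X n a \<Longrightarrow> rec_in X n b \<Longrightarrow>
   rec_in X n (\<lambda>xs. if P xs then a xs else b xs)"
  unfolding rec_pred_def
  apply (rule rec_ext[where f="\<lambda>xs. (if P xs then 1 else 0) * a xs + (1 - (if P xs then 1 else 0)) * b xs"])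
   apply (intro rec_add rec_mult rec_sub rec_const; assumption)
  apply simp
  done

lemma pred_const: "rec_pred X n (\<lambda>xs. c)"
  unfolding rec_pred_def by (cases c) (auto intro: rec_const)

lemma pred_eq: "rec_in X n a \<Longrightarrow> rec_in X n b \<Longrightarrow> rec_pred X n (\<lambda>xs. a xs = b xs)"
  unfolding rec_pred_def
  apply (rule rec_ext[where f="\<lambda>xs. 1 - ((a xs - b xs) + (b xs - a xs))"])
   apply (intro rec_add rec_sub rec_const; assumption)
  apply simp
  done

lemma pred_less: "rec_in X n a \<Longrightarrow> rec_in X n b \<Longrightarrow> rec_pred X n (\<lambda>xs. a xs < b xs)"
  unfolding rec_pred_def
  apply (rule rec_ext[where f="\<lambda>xs. 1 - (1 - (b xs - a xs))"])
   apply (intro rec_add rec_sub rec_const; assumption)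
  apply simp
  done

lemma pred_le: "rec_in X n a \<Longrightarrow> rec_in X n b \<Longrightarrow> rec_pred X n (\<lambda>xs. a xs \<le> b xs)"
  unfolding rec_pred_def
  apply (rule rec_ext[where f="\<lambda>xs. 1 - (1 - (Suc (b xs) - a xs))"])
   apply (intro rec_add rec_sub rec_const rec_Suc; assumption)
  apply simp
  done

lemma pred_not: "rec_pred X n P \<Longrightarrow> rec_pred X n (\<lambda>xs. \<not> P xs)"
  unfolding rec_pred_def
  apply (rule rec_ext[where f="\<lambda>xs. 1 - (if P xs then 1 else 0)"])
   apply (intro rec_sub rec_const; assumption)
  apply simp
  done

lemma pred_and: "rec_pred X n P \<Longrightarrow> rec_pred X n Q \<Longrightarrow> rec_pred X n (\<lambda>xs. P xs \<and> Q xs)"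
  unfolding rec_pred_def
  apply (rule rec_ext[where f="\<lambda>xs. (if P xs then 1 else 0) * (if Q xs then 1 else 0)"])
   apply (intro rec_mult; assumption)
  apply simp
  done

lemma pred_or: "rec_pred X n P \<Longrightarrow> rec_pred X n Q \<Longrightarrow> rec_pred X n (\<lambda>xs. P xs \<or> Q xs)"
proof -
  assume "rec_pred X n P" "rec_pred X n Q"
  then have "rec_pred X n (\<lambda>xs. \<not> (\<not> P xs \<and> \<not> Q xs))" by (intro pred_not pred_and)
  then show ?thesis by simp
qed

lemma pred_imp: "rec_pred X n P \<Longrightarrow> rec_pred X n Q \<Longrightarrow> rec_pred X n (\<lambda>xs. P xs \<longrightarrow> Q xs)"
proof -
  assume "rec_pred X n P" "rec_pred X n Q"
  then have "rec_pred X n (\<lambda>xs. \<not> P xs \<or> Q xs)" by (intro pred_not pred_or)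
  then show ?thesis by simp
qed

lemma pred_iff: "rec_pred X n P \<Longrightarrow> rec_pred X n Q \<Longrightarrow> rec_pred X n (\<lambda>xs. P xs \<longleftrightarrow> Q xs)"
proof -
  assume "rec_pred X n P" "rec_pred X n Q"
  then have "rec_pred X n (\<lambda>xs. (P xs \<longrightarrow> Q xs) \<and> (Q xs \<longrightarrow> P xs))" by (intro pred_imp pred_and)
  then show ?thesis by (smt (verit, best) rec_pred_def rec_ext)
qed

lemma pred_memX: "rec_in X n a \<Longrightarrow> rec_pred X n (\<lambda>xs. a xs \<in> X)"
  unfolding rec_pred_def by (rule rec_charX)

lemma rec_if: "rec_pred X n P \<Longrightarrow> rec_in X n a \<Longrightarrow> rec_in X n b \<Longrightarrow>
   rec_in X n (\<lambda>xs. if P xs then a xs else b xs)"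
  by (rule rec_if_raw)

lemma map_nth_from: "k \<le> length xs \<Longrightarrow> map (\<lambda>i. xs!i) [k..<length xs] = drop k xs"
  by (rule nth_equalityI) auto

lemma rec_rearr:
  assumes g: "rec_in X m g" and l: "length idx = m" and b: "\<forall>j\<in>set idx. j < n"
  shows "rec_in X n (\<lambda>xs. g (map (\<lambda>i. xs!i) idx))"
proof -
  have "rec_in X n (\<lambda>xs. g (map (\<lambda>f. f xs) (map (\<lambda>i xs. xs!i) idx)))"
    by (rule rec_comp_list[OF g]) (use l b in \<open>auto intro!: rec_proj\<close>)
  then show ?thesis by (simp add: o_def)
qed

lemma rec_shift1:
  assumes f: "rec_in X (Suc n) (\<lambda>ys. f (ys!0) (drop 1 ys))"
  shows "rec_in X (Suc (Suc n)) (\<lambda>ys. f (ys!0) (drop 2 ys))"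
proof -
  have "rec_in X (Suc (Suc n)) (\<lambda>ys. (\<lambda>zs. f (zs!0) (drop 1 zs)) (map (\<lambda>i. ys!i) (0 # [2..<Suc (Suc n)])))"
    by (rule rec_rearr[OF f]) auto
  then show ?thesis
  proof (rule rec_ext)
    fix ys :: "nat list" assume "length ys = Suc (Suc n)"
    then show "f (ys ! 0) (drop 2 ys) = (\<lambda>zs. f (zs!0) (drop 1 zs)) (map (\<lambda>i. ys!i) (0 # [2..<Suc (Suc n)]))"
      using map_nth_from[of 2 ys] by simp
  qed
qed

lemma rec_sum:
  assumes f: "rec_in X (Suc n) (\<lambda>ys. f (ys!0) (drop 1 ys))" and B: "rec_in X n B"
  shows "rec_in X n (\<lambda>xs. \<Sum>i<B xs. f i xs)"
proof -
  have "rec_in X n (\<lambda>xs. rec_nat 0 (\<lambda>y r. r + f y xs) (B xs))"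
    apply (rule rec_prim[where s="\<lambda>y r xs. r + f y xs", OF B rec_const])
    apply (rule rec_add[OF rec_proj rec_shift1[OF f]])
    apply simp
    done
  moreover have "rec_nat 0 (\<lambda>y r. r + f y xs) b = (\<Sum>i<b. f i xs)" for b xs
    by (induction b) auto
  ultimately show ?thesis by simp
qed

lemma pred_cong: "rec_pred X n P \<Longrightarrow> (\<And>xs. length xs = n \<Longrightarrow> Q xs = P xs) \<Longrightarrow> rec_pred X n Q"
  unfolding rec_pred_def by (erule rec_ext) simp

lemma rec_cong: "rec_in X n f \<Longrightarrow> (\<And>xs. length xs = n \<Longrightarrow> g xs = f xs) \<Longrightarrow> rec_in X n g"
  by (erule rec_ext) simp

lemma pred_ball:
  assumes P: "rec_pred X (Suc n) (\<lambda>ys. P (ys!0) (drop 1 ys))" and B: "rec_in X n B"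
  shows "rec_pred X n (\<lambda>xs. \<forall>i<B xs. P i xs)"
proof -
  have "rec_pred X (Suc n) (\<lambda>ys. \<not> P (ys!0) (drop 1 ys))" by (rule pred_not[OF P])
  then have "rec_in X n (\<lambda>xs. \<Sum>i<B xs. if \<not> P i xs then 1 else 0)"
    unfolding rec_pred_def by (rule rec_sum[OF _ B])
  then have "rec_pred X n (\<lambda>xs. (\<Sum>i<B xs. if \<not> P i xs then 1 else 0) = (0::nat))"
    using pred_eq[OF _ rec_const[of X n 0]] by blast
  then show ?thesis by (rule pred_cong) auto
qed

lemma pred_bex:
  assumes P: "rec_pred X (Suc n) (\<lambda>ys. P (ys!0) (drop 1 ys))" and B: "rec_in X n B"
  shows "rec_pred X n (\<lambda>xs. \<exists>i<B xs. P i xs)"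
proof -
  have "rec_pred X (Suc n) (\<lambda>ys. \<not> P (ys!0) (drop 1 ys))" by (rule pred_not[OF P])
  then have "rec_pred X n (\<lambda>xs. \<not> (\<forall>i<B xs. \<not> P i xs))" by (rule pred_not[OF pred_ball[OF _ B]])
  then show ?thesis by simp
qed

lemma rec_least:
  assumes P: "rec_pred X (Suc n) (\<lambda>ys. P (ys!0) (drop 1 ys))"
    and ex: "\<And>xs. length xs = n \<Longrightarrow> \<exists>y. P y xs"
  shows "rec_in X n (\<lambda>xs. LEAST y. P y xs)"
proof -
  have g: "rec_in X (n + 1) (\<lambda>ys. 1 - (if P (ys!0) (drop 1 ys) then 1 else 0))"
    using P unfolding rec_pred_def by (auto intro!: rec_sub rec_const)
  have "\<forall>xs. length xs = n \<longrightarrow> (\<exists>y. (\<lambda>ys. 1 - (if P (ys!0) (drop 1 ys) then 1 else 0)) (y # xs) = (0::nat))"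
  proof (intro allI impI)
    fix xs :: "nat list" assume "length xs = n"
    then obtain y where "P y xs" using ex by blast
    then show "\<exists>y. (\<lambda>ys. 1 - (if P (ys!0) (drop 1 ys) then 1 else 0)) (y # xs) = (0::nat)"
      by (intro exI[of _ y]) simp
  qed
  from rec_in.mu[OF g this] show ?thesis by (rule rec_ext) simp
qed

lemma rec_bsum:
  assumes f: "rec_in X (Suc n) (\<lambda>ys. f (ys!0) (drop 1 ys))" and B: "rec_in X n B"
  shows "rec_in X n (\<lambda>xs. \<Sum>i<B xs. f i xs)"
  using rec_sum[OF f B] .

lemmas rec_intros = rec_add rec_sub rec_mult rec_Suc rec_dec rec_if rec_sum rec_least
  pred_eq pred_less pred_le pred_not pred_and pred_or pred_imp pred_iff pred_memX pred_ball pred_bex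
  rec_proj rec_proj_drop rec_const pred_const

lemma rec_max: "rec_in X n a \<Longrightarrow> rec_in X n b \<Longrightarrow> rec_in X n (\<lambda>xs. max (a xs) (b xs))"
  unfolding max_def by (intro rec_intros; assumption)

lemma rec_min: "rec_in X n a \<Longrightarrow> rec_in X n b \<Longrightarrow> rec_in X n (\<lambda>xs. min (a xs) (b xs))"
  unfolding min_def by (intro rec_intros; assumption)

lemma rec_prim':
  assumes c: "rec_in X n c" and a: "rec_in X n a"
    and s: "rec_in X (Suc (Suc n)) (\<lambda>ys. s (ys!0) (ys!1) (drop 2 ys))"
  shows "rec_in X n (\<lambda>xs. rec_nat (a xs) (\<lambda>y r. s y r xs) (c xs))"
  using rec_prim[OF c a s] .

lemma "rec_in X 2 (\<lambda>xs. \<Sum>i<xs!0. if (\<exists>j<i. j + xs!1 = i) then xs!1 else 0)"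
  by (intro rec_intros | simp only: drop_drop)+


definition pe :: "nat \<Rightarrow> nat \<Rightarrow> nat" where "pe a b = prod_encode (a, b)"
definition pfst :: "nat \<Rightarrow> nat" where "pfst z = fst (prod_decode z)"
definition psnd :: "nat \<Rightarrow> nat" where "psnd z = snd (prod_decode z)"

lemma pfst_pe[simp]: "pfst (pe a b) = a" and psnd_pe[simp]: "psnd (pe a b) = b"
  by (auto simp: pfst_def psnd_def pe_def)

lemma rec_triangle: "rec_in X n a \<Longrightarrow> rec_in X n (\<lambda>xs. triangle (a xs))"
proof -
  assume a: "rec_in X n a"
  have "rec_in X n (\<lambda>xs. rec_nat 0 (\<lambda>y r. r + Suc y) (a xs))"
    by (rule rec_prim[OF a]) (intro rec_intros | simp only: drop_drop)+
  moreover have "rec_nat 0 (\<lambda>y r. r + Suc y) m = triangle m" for m by (induction m) auto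
  ultimately show ?thesis by simp
qed

lemma rec_pe: "rec_in X n a \<Longrightarrow> rec_in X n b \<Longrightarrow> rec_in X n (\<lambda>xs. pe (a xs) (b xs))"
  unfolding pe_def prod_encode_def by (auto intro!: rec_add rec_triangle)

lemma pfst_least: "pfst z = (LEAST a. \<exists>b<Suc z. pe a b = z)"
proof -
  obtain a b where ab: "prod_decode z = (a, b)" by force
  then have z: "pe a b = z" unfolding pe_def by (metis prod_decode_inverse)
  then have "b < Suc z" unfolding pe_def using le_prod_encode_2 by (metis less_Suc_eq_le)
  then have "(LEAST a. \<exists>b<Suc z. pe a b = z) = a"
    by (intro Least_equality) (use z in \<open>auto simp: pe_def\<close>)
  then show ?thesis using ab by (simp add: pfst_def)
qed

lemma psnd_least: "psnd z = (LEAST b. \<exists>a<Suc z. pe a b = z)"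
proof -
  obtain a b where ab: "prod_decode z = (a, b)" by force
  then have z: "pe a b = z" unfolding pe_def by (metis prod_decode_inverse)
  then have "a < Suc z" unfolding pe_def using le_prod_encode_1 by (metis less_Suc_eq_le)
  then have "(LEAST b. \<exists>a<Suc z. pe a b = z) = b"
    by (intro Least_equality) (use z in \<open>auto simp: pe_def\<close>)
  then show ?thesis using ab by (simp add: psnd_def)
qed

lemma rec_pfst1: "rec_in X 1 (\<lambda>xs. pfst (xs!0))"
  unfolding pfst_least
  apply (rule rec_least)
   apply (intro rec_intros rec_pe | simp only: drop_drop)+
  apply (rule_tac x="pfst (xs!0)" in exI)
  apply (rule_tac x="psnd (xs!0)" in exI)
  apply (simp add: pfst_def psnd_def pe_def)
  by (metis le_imp_less_Suc le_prod_encode_2 prod.collapse prod_decode_inverse)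

lemma rec_psnd1: "rec_in X 1 (\<lambda>xs. psnd (xs!0))"
  unfolding psnd_least
  apply (rule rec_least)
   apply (intro rec_intros rec_pe | simp only: drop_drop)+
  apply (rule_tac x="psnd (xs!0)" in exI)
  apply (rule_tac x="pfst (xs!0)" in exI)
  apply (simp add: pfst_def psnd_def pe_def)
  by (metis le_imp_less_Suc le_prod_encode_1 prod.collapse prod_decode_inverse)

lemma rec_pfst: "rec_in X n a \<Longrightarrow> rec_in X n (\<lambda>xs. pfst (a xs))"
  by (rule rec_comp1[OF rec_pfst1])
lemma rec_psnd: "rec_in X n a \<Longrightarrow> rec_in X n (\<lambda>xs. psnd (a xs))"
  by (rule rec_comp1[OF rec_psnd1])

definition consc :: "nat \<Rightarrow> nat \<Rightarrow> nat" where "consc x c = Suc (pe x c)"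
definition hdc :: "nat \<Rightarrow> nat" where "hdc c = pfst (c - 1)"
definition tlc :: "nat \<Rightarrow> nat" where "tlc c = psnd (c - 1)"
definition nthc :: "nat \<Rightarrow> nat \<Rightarrow> nat" where "nthc c i = hdc ((tlc ^^ i) c)"
definition lenc :: "nat \<Rightarrow> nat" where "lenc c = (LEAST i. (tlc ^^ i) c = 0)"

lemma pd0: "prod_decode 0 = (0,0)"
  by (metis prod_decode_inverse prod_encode_eq le_prod_encode_1 le_prod_encode_2 le_zero_eq prod.collapse)

lemma le_cons: "list_encode (x # xs) = consc x (list_encode xs)"
  by (simp add: consc_def pe_def)
lemma hdc_le[simp]: "hdc (list_encode (x # xs)) = x"
  by (simp add: hdc_def pfst_def)
lemma tlc_le[simp]: "tlc (list_encode (x # xs)) = list_encode xs"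
  by (simp add: tlc_def psnd_def)
lemma tlc_0[simp]: "tlc 0 = 0" by (simp add: tlc_def psnd_def pd0)
lemma hdc_0[simp]: "hdc 0 = 0" by (simp add: hdc_def pfst_def pd0)
lemma hdc_consc[simp]: "hdc (consc x c) = x" by (simp add: hdc_def consc_def)
lemma tlc_consc[simp]: "tlc (consc x c) = c" by (simp add: tlc_def consc_def)
lemma consc_pos[simp]: "consc x c \<noteq> 0" by (simp add: consc_def)

lemma tlc_pow_le: "(tlc ^^ i) (list_encode xs) = list_encode (drop i xs)"
proof (induction i arbitrary: xs)
  case 0 then show ?case by simp
next
  case (Suc i)
  show ?case
  proof (cases xs)
    case Nil
    then show ?thesis using Suc[of "[]"] by (simp add: funpow_swap1)
  next
    case (Cons y ys)
    then show ?thesis using Suc[of ys] by (simp only: funpow_Suc_right o_apply tlc_le) simp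
  qed
qed

lemma nthc_le: "i < length xs \<Longrightarrow> nthc (list_encode xs) i = xs ! i"
proof -
  assume "i < length xs"
  then have "drop i xs = xs!i # drop (Suc i) xs" by (simp add: Cons_nth_drop_Suc)
  then show ?thesis by (simp only: nthc_def tlc_pow_le hdc_le)
qed

lemma nthc_le_ge: "length xs \<le> i \<Longrightarrow> nthc (list_encode xs) i = 0"
  by (simp add: nthc_def tlc_pow_le)

lemma nthc_consc_0[simp]: "nthc (consc x c) 0 = x" by (simp add: nthc_def)
lemma nthc_consc_Suc[simp]: "nthc (consc x c) (Suc i) = nthc c i"
  by (simp add: nthc_def funpow_swap1)

lemma list_encode_0_iff: "list_encode xs = 0 \<longleftrightarrow> xs = []"
  by (cases xs) auto

lemma lenc_le[simp]: "lenc (list_encode xs) = length xs"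
  unfolding lenc_def tlc_pow_le list_encode_0_iff
  by (rule Least_equality) auto

lemma rec_consc: "rec_in X n a \<Longrightarrow> rec_in X n b \<Longrightarrow> rec_in X n (\<lambda>xs. consc (a xs) (b xs))"
  unfolding consc_def by (intro rec_Suc rec_pe)
lemma rec_hdc: "rec_in X n a \<Longrightarrow> rec_in X n (\<lambda>xs. hdc (a xs))"
  unfolding hdc_def by (intro rec_pfst rec_dec)
lemma rec_tlc: "rec_in X n a \<Longrightarrow> rec_in X n (\<lambda>xs. tlc (a xs))"
  unfolding tlc_def by (intro rec_psnd rec_dec)

lemma funpow_rec_nat: "(f ^^ i) c = rec_nat c (\<lambda>y r. f r) i"
  by (induction i) auto

lemma rec_tlcpow: "rec_in X n a \<Longrightarrow> rec_in X n b \<Longrightarrow> rec_in X n (\<lambda>xs. (tlc ^^ (b xs)) (a xs))"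
  unfolding funpow_rec_nat
  apply (rule rec_prim, assumption, assumption)
  apply (intro rec_tlc rec_proj)
  apply simp
  done

lemma rec_nthc: "rec_in X n a \<Longrightarrow> rec_in X n b \<Longrightarrow> rec_in X n (\<lambda>xs. nthc (a xs) (b xs))"
  unfolding nthc_def by (intro rec_hdc rec_tlcpow)

lemma tlc_less: "c \<noteq> 0 \<Longrightarrow> tlc c < c"
  unfolding tlc_def psnd_def
  by (metis One_nat_def Suc_pred le_imp_less_Suc le_prod_encode_2 neq0_conv prod.collapse prod_decode_inverse)

lemma tlc_pow_ex: "(tlc ^^ c) c = 0"
proof -
  have "(tlc ^^ i) c \<le> c - i" for i
  proof (induction i)
    case 0 then show ?case by simp
  next
    case (Suc i)
    show ?case
    proof (cases "(tlc ^^ i) c = 0")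
      case True then show ?thesis by simp
    next
      case False
      then have "tlc ((tlc ^^ i) c) < (tlc ^^ i) c" by (rule tlc_less)
      then show ?thesis using Suc by simp
    qed
  qed
  then show ?thesis by (metis diff_self_eq_0 le_zero_eq)
qed

lemma rec_lenc: "rec_in X n a \<Longrightarrow> rec_in X n (\<lambda>xs. lenc (a xs))"
proof -
  assume a: "rec_in X n a"
  have 1: "rec_in X 1 (\<lambda>xs. LEAST i. (tlc ^^ i) (xs!0) = 0)"
    by (rule rec_least) ((intro rec_intros rec_tlcpow | simp only: drop_drop)+, use tlc_pow_ex in blast)
  show ?thesis unfolding lenc_def by (rule rec_comp1[OF 1 a])
qed

lemmas code_intros = rec_pe rec_pfst rec_psnd rec_consc rec_hdc rec_tlc rec_nthc rec_lenc


definition ok_gen :: "(nat \<Rightarrow> nat \<Rightarrow> nat \<Rightarrow> bool) \<Rightarrow> nat \<Rightarrow> nat \<Rightarrow> nat \<Rightarrow> nat \<Rightarrow> bool" where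
"ok_gen R p a y x \<longleftrightarrow>
  (nthc p 0 = 0 \<and> y = 0) \<or>
  (nthc p 0 = 1 \<and> y = Suc (nthc a 0)) \<or>
  (nthc p 0 = 2 \<and> y = nthc a (nthc p 1)) \<or>
  (nthc p 0 = 3 \<and> lenc x = lenc (nthc p 2) \<and>
     (\<forall>j<lenc (nthc p 2). R (nthc (nthc p 2) j) a (nthc x j)) \<and> R (nthc p 1) x y) \<or>
  (nthc p 0 = 4 \<and> lenc x = Suc (nthc a 0) \<and> R (nthc p 1) (tlc a) (nthc x 0) \<and>
     (\<forall>j<nthc a 0. R (nthc p 2) (consc j (consc (nthc x j) (tlc a))) (nthc x (Suc j))) \<and>
     y = nthc x (nthc a 0)) \<or>
  (nthc p 0 = 5 \<and> R (nthc p 1) (consc y a) 0 \<and> (\<forall>j<y. \<exists>v. v \<noteq> 0 \<and> R (nthc p 1) (consc j a) v))"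

lemma ok_gen_mono: "ok_gen R p a y x \<Longrightarrow> (\<And>p a y. R p a y \<Longrightarrow> S p a y) \<Longrightarrow> ok_gen S p a y x"
  unfolding ok_gen_def by blast

lemma ok_gen_mono'[mono]: "R \<le> S \<Longrightarrow> ok_gen R p a y x \<longrightarrow> ok_gen S p a y x"
  using ok_gen_mono[of R p a y x S] by (auto simp: le_fun_def)

inductive comp_by :: "nat \<Rightarrow> nat \<Rightarrow> nat \<Rightarrow> bool" where
  cb: "ok_gen comp_by p a y x \<Longrightarrow> comp_by p a y"

definition trip :: "nat \<Rightarrow> nat \<times> nat \<times> nat" where
  "trip l = (nthc l 0, nthc l 1, nthc l 2)"

definition has :: "nat set \<Rightarrow> nat \<Rightarrow> nat \<Rightarrow> nat \<Rightarrow> bool" where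
  "has E p a y \<longleftrightarrow> (\<exists>l\<in>E. trip l = (p, a, y))"

definition okE :: "nat set \<Rightarrow> nat \<Rightarrow> bool" where
  "okE E l \<longleftrightarrow> ok_gen (has E) (nthc l 0) (nthc l 1) (nthc l 2) (nthc l 3)"

definition validA :: "nat list \<Rightarrow> bool" where
  "validA L \<longleftrightarrow> (\<forall>k<length L. okE (set (take k L)) (L ! k))"

lemma okE_mono: "okE E l \<Longrightarrow> E \<subseteq> F \<Longrightarrow> okE F l"
  unfolding okE_def by (erule ok_gen_mono) (auto simp: has_def)

lemma validA_append: "validA A \<Longrightarrow> validA B \<Longrightarrow> validA (A @ B)"
  unfolding validA_def
proof (intro allI impI)
  fix k assume A: "\<forall>k<length A. okE (set (take k A)) (A ! k)"
    and B: "\<forall>k<length B. okE (set (take k B)) (B ! k)" and k: "k < length (A @ B)"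
  show "okE (set (take k (A @ B))) ((A @ B) ! k)"
  proof (cases "k < length A")
    case True then show ?thesis using A by (simp add: nth_append)
  next
    case False
    then have "okE (set (take (k - length A) B)) (B ! (k - length A))" using B k by auto
    then show ?thesis using False by (auto simp: nth_append elim!: okE_mono)
  qed
qed

lemma validA_snoc: "validA L \<Longrightarrow> okE (set L) l \<Longrightarrow> validA (L @ [l])"
  unfolding validA_def by (auto simp: nth_append less_Suc_eq)

lemma validA_Nil: "validA []" by (simp add: validA_def)

lemma collect:
  fixes t :: "nat \<Rightarrow> nat \<times> nat \<times> nat" and m :: nat
  shows "(\<And>i. i < m \<Longrightarrow> \<exists>L. validA L \<and> has (set L) (fst (t i)) (fst (snd (t i))) (snd (snd (t i))))
   \<Longrightarrow> \<exists>L. validA L \<and> (\<forall>i<m. has (set L) (fst (t i)) (fst (snd (t i))) (snd (snd (t i))))"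
proof (induction m)
  case 0 then show ?case using validA_Nil by auto
next
  case (Suc m)
  then obtain L where L: "validA L" "\<forall>i<m. has (set L) (fst (t i)) (fst (snd (t i))) (snd (snd (t i)))"
    by auto
  obtain L' where L': "validA L'" "has (set L') (fst (t m)) (fst (snd (t m))) (snd (snd (t m)))"
    using Suc.prems by blast
  show ?case
    by (rule exI[of _ "L @ L'"]) (use L L' validA_append in \<open>auto simp: has_def less_Suc_eq\<close>)
qed

lemma soundA: "validA L \<Longrightarrow> l \<in> set L \<Longrightarrow> comp_by (nthc l 0) (nthc l 1) (nthc l 2)"
proof -
  assume V: "validA L"
  have "\<forall>k'<k. comp_by (nthc (L!k') 0) (nthc (L!k') 1) (nthc (L!k') 2)" if "k \<le> length L" for k
    using that
  proof (induction k)
    case 0 then show ?case by simp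
  next
    case (Suc k)
    then have IH: "\<forall>k'<k. comp_by (nthc (L!k') 0) (nthc (L!k') 1) (nthc (L!k') 2)" by simp
    have "okE (set (take k L)) (L ! k)" using V Suc.prems by (simp add: validA_def)
    then have "ok_gen comp_by (nthc (L!k) 0) (nthc (L!k) 1) (nthc (L!k) 2) (nthc (L!k) 3)"
      unfolding okE_def
    proof (rule ok_gen_mono)
      fix p a y assume "has (set (take k L)) p a y"
      then obtain l where "l \<in> set (take k L)" "trip l = (p, a, y)" by (auto simp: has_def)
      then obtain k' where "k' < k" "k' < length L" "L ! k' = l" by (auto simp: in_set_conv_nth)
      then show "comp_by p a y" using IH \<open>trip l = (p, a, y)\<close> by (auto simp: trip_def)
    qed
    then have "comp_by (nthc (L!k) 0) (nthc (L!k) 1) (nthc (L!k) 2)" by (rule comp_by.cb)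
    then show ?case using IH by (auto simp: less_Suc_eq)
  qed
  then show "l \<in> set L \<Longrightarrow> comp_by (nthc l 0) (nthc l 1) (nthc l 2)"
    by (auto simp: in_set_conv_nth)
qed

definition mkline :: "nat \<Rightarrow> nat \<Rightarrow> nat \<Rightarrow> nat \<Rightarrow> nat" where
  "mkline p a y x = list_encode [p, a, y, x]"

lemma mkline_nth[simp]: "nthc (mkline p a y x) 0 = p" "nthc (mkline p a y x) 1 = a"
  "nthc (mkline p a y x) 2 = y" "nthc (mkline p a y x) 3 = x"
  by (simp_all add: mkline_def le_cons numeral_2_eq_2 numeral_3_eq_3 del: list_encode.simps)

lemma mkline_nth1[simp]: "nthc (mkline p a y x) (Suc 0) = a"
  using mkline_nth(2) by simp

lemma completeA: "comp_by p a y \<Longrightarrow> \<exists>L. validA L \<and> has (set L) p a y"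
proof (induction rule: comp_by.induct)
  case (cb p a y x)
  let ?R = "\<lambda>p a y. comp_by p a y \<and> (\<exists>L. validA L \<and> has (set L) p a y)"
  have ok: "ok_gen ?R p a y x" using cb .
  have main: "\<exists>L. validA L \<and> ok_gen (has (set L)) p a y x"
  proof -
    consider (T0) "nthc p 0 = 0" | (T1) "nthc p 0 = 1" | (T2) "nthc p 0 = 2" | (T3) "nthc p 0 = 3"
      | (T4) "nthc p 0 = 4" | (T5) "nthc p 0 = 5" | (T6) "nthc p 0 > 5" by linarith
    then show ?thesis
    proof cases
      case T0 then show ?thesis using ok validA_Nil unfolding ok_gen_def by force
    next
      case T1 then show ?thesis using ok validA_Nil unfolding ok_gen_def by force
    next
      case T2 then show ?thesis using ok validA_Nil unfolding ok_gen_def by force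
    next
      case T6 then show ?thesis using ok unfolding ok_gen_def by simp
    next
      case T3
      then have C: "nthc p 0 = 3" "lenc x = lenc (nthc p 2)"
         "\<forall>j<lenc (nthc p 2). ?R (nthc (nthc p 2) j) a (nthc x j)" "?R (nthc p 1) x y"
        using ok unfolding ok_gen_def by simp_all
      define t where "t i = (if i < lenc (nthc p 2) then (nthc (nthc p 2) i, a, nthc x i) else (nthc p 1, x, y))" for i
      have "\<exists>L. validA L \<and> (\<forall>i<Suc (lenc (nthc p 2)). has (set L) (fst (t i)) (fst (snd (t i))) (snd (snd (t i))))"
      proof (rule collect)
        fix i assume i: "i < Suc (lenc (nthc p 2))"
        show "\<exists>L. validA L \<and> has (set L) (fst (t i)) (fst (snd (t i))) (snd (snd (t i)))"
        proof (cases "i < lenc (nthc p 2)")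
          case True then show ?thesis using C(3)[rule_format, OF True] by (simp add: t_def)
        next
          case False then show ?thesis using C(4) by (simp add: t_def)
        qed
      qed
      then obtain L where L: "validA L" "\<forall>i<Suc (lenc (nthc p 2)). has (set L) (fst (t i)) (fst (snd (t i))) (snd (snd (t i)))"
        by blast
      have "(\<forall>j<lenc (nthc p 2). has (set L) (nthc (nthc p 2) j) a (nthc x j)) \<and> has (set L) (nthc p 1) x y"
      proof (intro conjI allI impI)
        fix j assume "j < lenc (nthc p 2)"
        then show "has (set L) (nthc (nthc p 2) j) a (nthc x j)" using L(2)[rule_format, of j] by (simp add: t_def)
      next
        show "has (set L) (nthc p 1) x y" using L(2)[rule_format, of "lenc (nthc p 2)"] by (simp add: t_def)
      qed
      then have "ok_gen (has (set L)) p a y x" unfolding ok_gen_def using C by simp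
      then show ?thesis using L by blast
    next
      case T4
      then have P: "nthc p 0 = 4" "lenc x = Suc (nthc a 0)" "?R (nthc p 1) (tlc a) (nthc x 0)"
         "\<forall>j<nthc a 0. ?R (nthc p 2) (consc j (consc (nthc x j) (tlc a))) (nthc x (Suc j))"
         "y = nthc x (nthc a 0)"
        using ok unfolding ok_gen_def by simp_all
      define t where "t i = (if i = 0 then (nthc p 1, tlc a, nthc x 0) else
        (nthc p 2, consc (i - 1) (consc (nthc x (i - 1)) (tlc a)), nthc x i))" for i
      have "\<exists>L. validA L \<and> (\<forall>i<Suc (nthc a 0). has (set L) (fst (t i)) (fst (snd (t i))) (snd (snd (t i))))"
      proof (rule collect)
        fix i assume i: "i < Suc (nthc a 0)"
        show "\<exists>L. validA L \<and> has (set L) (fst (t i)) (fst (snd (t i))) (snd (snd (t i)))"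
        proof (cases i)
          case 0 then show ?thesis using P(3) by (simp add: t_def)
        next
          case (Suc j) then have "j < nthc a 0" using i by simp
          then show ?thesis using P(4)[rule_format, of j] Suc by (simp add: t_def)
        qed
      qed
      then obtain L where L: "validA L" "\<forall>i<Suc (nthc a 0). has (set L) (fst (t i)) (fst (snd (t i))) (snd (snd (t i)))"
        by blast
      have "has (set L) (nthc p 1) (tlc a) (nthc x 0) \<and>
         (\<forall>j<nthc a 0. has (set L) (nthc p 2) (consc j (consc (nthc x j) (tlc a))) (nthc x (Suc j)))"
      proof (intro conjI allI impI)
        show "has (set L) (nthc p 1) (tlc a) (nthc x 0)" using L(2)[rule_format, of 0] by (simp add: t_def)
      next
        fix j assume "j < nthc a 0"
        then show "has (set L) (nthc p 2) (consc j (consc (nthc x j) (tlc a))) (nthc x (Suc j))"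
          using L(2)[rule_format, of "Suc j"] by (simp add: t_def)
      qed
      then have "ok_gen (has (set L)) p a y x" unfolding ok_gen_def using P by simp
      then show ?thesis using L by blast
    next
      case T5
      then have M: "nthc p 0 = 5" "?R (nthc p 1) (consc y a) 0" "\<forall>j<y. \<exists>v. v \<noteq> 0 \<and> ?R (nthc p 1) (consc j a) v"
        using ok unfolding ok_gen_def by simp_all
      obtain V where V: "\<forall>j<y. V j \<noteq> 0 \<and> ?R (nthc p 1) (consc j a) (V j)"
        using M(3) by metis
      define t where "t i = (if i < y then (nthc p 1, consc i a, V i) else (nthc p 1, consc y a, 0))" for i
      have "\<exists>L. validA L \<and> (\<forall>i<Suc y. has (set L) (fst (t i)) (fst (snd (t i))) (snd (snd (t i))))"
      proof (rule collect)
        fix i assume i: "i < Suc y"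
        show "\<exists>L. validA L \<and> has (set L) (fst (t i)) (fst (snd (t i))) (snd (snd (t i)))"
        proof (cases "i < y")
          case True then show ?thesis using V True by (simp add: t_def)
        next
          case False then show ?thesis using M(2) by (simp add: t_def)
        qed
      qed
      then obtain L where L: "validA L" "\<forall>i<Suc y. has (set L) (fst (t i)) (fst (snd (t i))) (snd (snd (t i)))"
        by blast
      have "has (set L) (nthc p 1) (consc y a) 0 \<and> (\<forall>j<y. \<exists>v. v \<noteq> 0 \<and> has (set L) (nthc p 1) (consc j a) v)"
      proof (intro conjI allI impI)
        show "has (set L) (nthc p 1) (consc y a) 0" using L(2)[rule_format, of y] by (simp add: t_def)
      next
        fix j assume j: "j < y"
        then have "has (set L) (nthc p 1) (consc j a) (V j)" using L(2)[rule_format, of j] by (simp add: t_def)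
        then show "\<exists>v. v \<noteq> 0 \<and> has (set L) (nthc p 1) (consc j a) v" using V j by blast
      qed
      then have "ok_gen (has (set L)) p a y x" unfolding ok_gen_def using M by simp
      then show ?thesis using L by blast
    qed
  qed
  then obtain L where L: "validA L" "ok_gen (has (set L)) p a y x" by blast
  have "validA (L @ [mkline p a y x])"
    by (rule validA_snoc[OF L(1)]) (simp add: okE_def L(2))
  moreover have "has (set (L @ [mkline p a y x])) p a y" by (simp add: has_def trip_def)
  ultimately show ?case by blast
qed

lemma code_eq: "lenc x = lenc x' \<Longrightarrow> (\<And>j. j < lenc x \<Longrightarrow> nthc x j = nthc x' j) \<Longrightarrow> x = x'"
proof -
  assume l: "lenc x = lenc x'" and n: "\<And>j. j < lenc x \<Longrightarrow> nthc x j = nthc x' j"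
  obtain xs xs' where xs: "x = list_encode xs" "x' = list_encode xs'"
    by (metis list_decode_inverse)
  have "xs = xs'"
    using l n unfolding xs by (intro nth_equalityI) (auto simp: nthc_le)
  then show ?thesis using xs by simp
qed

lemma comp_by_det: "comp_by p a y \<Longrightarrow> comp_by p a y' \<Longrightarrow> y = y'"
proof (induction arbitrary: y' rule: comp_by.induct)
  case (cb p a y x)
  from cb.prems obtain x' where ok': "ok_gen comp_by p a y' x'" by (cases rule: comp_by.cases) blast
  let ?R = "\<lambda>p a y. comp_by p a y \<and> (\<forall>y'. comp_by p a y' \<longrightarrow> y = y')"
  have ok: "ok_gen ?R p a y x" using cb.IH .
  consider "nthc p 0 = 0" | "nthc p 0 = 1" | "nthc p 0 = 2" | "nthc p 0 = 3" | "nthc p 0 = 4" | "nthc p 0 = 5"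
    | "nthc p 0 > 5" by linarith
  then show ?case
  proof cases
    case 4
    from ok 4 have A: "lenc x = lenc (nthc p 2)" "\<forall>j<lenc (nthc p 2). ?R (nthc (nthc p 2) j) a (nthc x j)"
      "?R (nthc p 1) x y" unfolding ok_gen_def by simp_all
    from ok' 4 have B: "lenc x' = lenc (nthc p 2)" "\<forall>j<lenc (nthc p 2). comp_by (nthc (nthc p 2) j) a (nthc x' j)"
      "comp_by (nthc p 1) x' y'" unfolding ok_gen_def by simp_all
    have "x = x'" by (rule code_eq) (use A B in auto)
    then show ?thesis using A B by auto
  next
    case 5
    from ok 5 have A: "lenc x = Suc (nthc a 0)" "?R (nthc p 1) (tlc a) (nthc x 0)"
      "\<forall>j<nthc a 0. ?R (nthc p 2) (consc j (consc (nthc x j) (tlc a))) (nthc x (Suc j))"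
      "y = nthc x (nthc a 0)" unfolding ok_gen_def by simp_all
    from ok' 5 have B: "lenc x' = Suc (nthc a 0)" "comp_by (nthc p 1) (tlc a) (nthc x' 0)"
      "\<forall>j<nthc a 0. comp_by (nthc p 2) (consc j (consc (nthc x' j) (tlc a))) (nthc x' (Suc j))"
      "y' = nthc x' (nthc a 0)" unfolding ok_gen_def by simp_all
    have "j \<le> nthc a 0 \<Longrightarrow> nthc x j = nthc x' j" for j
    proof (induction j)
      case 0 then show ?case using A B by auto
    next
      case (Suc j)
      then have "j < nthc a 0" by simp
      then show ?case using A(3) B(3) Suc by auto
    qed
    then show ?thesis using A B by auto
  next
    case 6
    from ok 6 have A: "?R (nthc p 1) (consc y a) 0" "\<forall>j<y. \<exists>v. v \<noteq> 0 \<and> ?R (nthc p 1) (consc j a) v"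
      unfolding ok_gen_def by simp_all
    from ok' 6 have B: "comp_by (nthc p 1) (consc y' a) 0" "\<forall>j<y'. \<exists>v. v \<noteq> 0 \<and> comp_by (nthc p 1) (consc j a) v"
      unfolding ok_gen_def by simp_all
    show ?thesis
    proof (rule ccontr)
      assume "y \<noteq> y'"
      then consider "y < y'" | "y' < y" by linarith
      then show False
      proof cases
        case 1 then obtain v where "v \<noteq> 0" "comp_by (nthc p 1) (consc y a) v" using B by blast
        then show False using A by auto
      next
        case 2 then obtain v where "v \<noteq> 0" "?R (nthc p 1) (consc y' a) v" using A by blast
        then show False using B by auto
      qed
    qed
  next
    case 7 then show ?thesis using ok unfolding ok_gen_def by simp_all
  qed (use ok ok' in \<open>simp add: ok_gen_def\<close>)+
qed


lemma nthc_Cons0[simp]: "nthc (list_encode (x#xs)) 0 = x"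
  apply (simp only: nthc_def funpow_0)
  apply (rule hdc_le)
  done
lemma nthc_ConsSuc[simp]: "nthc (list_encode (x#xs)) (Suc i) = nthc (list_encode xs) i"
  by (simp only: le_cons nthc_consc_Suc)
lemma nthc_Cons_num[simp]: "nthc (list_encode (x#xs)) (numeral k) = nthc (list_encode xs) (pred_numeral k)"
  by (simp only: numeral_eq_Suc nthc_ConsSuc)
lemma list_encode_Nil: "list_encode [] = 0" by simp
declare list_encode.simps[simp del]
declare list_encode_Nil[simp]

lemma le_single: "list_encode [x] = consc x 0"
  by (simp add: le_cons)

lemma rep_rec:
  assumes "rec_in X n f" "X = {}"
  shows "\<exists>p. \<forall>xs. length xs = n \<longrightarrow> comp_by p (list_encode xs) (f xs)"
  using assms
proof (induction rule: rec_in.induct)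
  case (zero n)
  have "comp_by (list_encode [0]) (list_encode xs) 0" for xs
    by (rule comp_by.cb[where x=0]) (simp add: ok_gen_def nthc_le)
  then show ?case by blast
next
  case succ
  have "comp_by (list_encode [1]) (list_encode xs) (Suc (hd xs))" if "length xs = 1" for xs
    by (rule comp_by.cb[where x=0]) (use that in \<open>simp add: ok_gen_def nthc_le hd1\<close>)
  then show ?case by blast
next
  case (proj i n)
  have "comp_by (list_encode [2, i]) (list_encode xs) (xs ! i)" if "length xs = n" for xs
    by (rule comp_by.cb[where x=0]) (use that proj in \<open>simp add: ok_gen_def nthc_le\<close>)
  then show ?case by blast
next
  case char_X
  have "comp_by (list_encode [0]) (list_encode xs) 0" for xs
    by (rule comp_by.cb[where x=0]) (simp add: ok_gen_def nthc_le)
  then show ?case using char_X by auto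
next
  case (comp m g fs n)
  then obtain pg where pg: "\<forall>xs. length xs = m \<longrightarrow> comp_by pg (list_encode xs) (g xs)" by blast
  have "\<forall>i<m. \<exists>p. \<forall>xs. length xs = n \<longrightarrow> comp_by p (list_encode xs) ((fs!i) xs)" using comp by blast
  then obtain P where P: "\<forall>i<m. \<forall>xs. length xs = n \<longrightarrow> comp_by (P i) (list_encode xs) ((fs!i) xs)"
    by metis
  define F where "F = list_encode (map P [0..<m])"
  have "comp_by (list_encode [3, pg, F]) (list_encode xs) (g (map (\<lambda>f. f xs) fs))" if xs: "length xs = n" for xs
  proof (rule comp_by.cb[where x="list_encode (map (\<lambda>f. f xs) fs)"])
    have F2: "nthc (list_encode [3, pg, F]) 2 = F" by (simp add: nthc_le)
    have F1: "nthc (list_encode [3, pg, F]) 1 = pg" by (simp add: nthc_le)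
    have F0: "nthc (list_encode [3, pg, F]) 0 = 3" by (simp add: nthc_le)
    show "ok_gen comp_by (list_encode [3, pg, F]) (list_encode xs) (g (map (\<lambda>f. f xs) fs))
      (list_encode (map (\<lambda>f. f xs) fs))"
      unfolding ok_gen_def F2 F1 F0
      using comp.hyps(2) P xs pg by (simp add: F_def nthc_le)
  qed
  then show ?case by blast
next
  case (prim_rec n g h)
  then obtain pg where pg: "\<forall>xs. length xs = n \<longrightarrow> comp_by pg (list_encode xs) (g xs)" by blast
  from prim_rec obtain ph where ph: "\<forall>xs. length xs = n + 2 \<longrightarrow> comp_by ph (list_encode xs) (h xs)" by blast
  let ?p = "list_encode [4, pg, ph]"
  have "comp_by ?p (list_encode xs) (rec_nat (g (tl xs)) (\<lambda>y r. h (y # r # tl xs)) (hd xs))"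
    if xs: "length xs = n + 1" for xs
  proof -
    obtain k rest where kr: "xs = k # rest" using xs by (cases xs) auto
    then have lr: "length rest = n" using xs by simp
    define r where "r j = rec_nat (g rest) (\<lambda>y r. h (y # r # rest)) j" for j
    have "comp_by ?p (list_encode (k # rest)) (r k)"
    proof (rule comp_by.cb[where x="list_encode (map r [0..<Suc k])"])
      have F2: "nthc ?p 2 = ph" by (simp add: nthc_le)
      have F1: "nthc ?p 1 = pg" by (simp add: nthc_le)
      have F0: "nthc ?p 0 = 4" by (simp add: nthc_le)
      have A0: "nthc (list_encode (k # rest)) 0 = k" by (simp add: nthc_le)
      have T: "tlc (list_encode (k # rest)) = list_encode rest" by simp
      have N: "j < Suc k \<Longrightarrow> nthc (list_encode (map r [0..<Suc k])) j = r j" for j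
        by (simp add: nthc_le del: upt_Suc)
      have S: "j < k \<Longrightarrow> comp_by ph (consc j (consc (r j) (list_encode rest))) (r (Suc j))" for j
        using ph[rule_format, of "j # r j # rest"] lr by (simp add: le_cons[symmetric] r_def)
      show "ok_gen comp_by ?p (list_encode (k # rest)) (r k) (list_encode (map r [0..<Suc k]))"
        unfolding ok_gen_def F2 F1 F0 A0 T
        using N S pg lr by (simp add: r_def del: upt_Suc)
    qed
    then show ?thesis using kr by (simp add: r_def)
  qed
  then show ?case by blast
next
  case (mu n g)
  then obtain pg where pg: "\<forall>xs. length xs = n + 1 \<longrightarrow> comp_by pg (list_encode xs) (g xs)" by blast
  let ?p = "list_encode [5, pg]"
  have "comp_by ?p (list_encode xs) (LEAST y. g (y # xs) = 0)" if xs: "length xs = n" for xs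
  proof (rule comp_by.cb[where x=0])
    let ?y = "LEAST y. g (y # xs) = 0"
    have ex: "\<exists>y. g (y # xs) = 0" using mu xs by blast
    have F1: "nthc ?p 1 = pg" by (simp add: nthc_le)
    have F0: "nthc ?p 0 = 5" by (simp add: nthc_le)
    have A: "comp_by pg (consc ?y (list_encode xs)) 0"
      using pg[rule_format, of "?y # xs"] xs LeastI_ex[OF ex] by (simp add: le_cons)
    have B: "\<forall>j<?y. \<exists>v. v \<noteq> 0 \<and> comp_by pg (consc j (list_encode xs)) v"
    proof (intro allI impI)
      fix j assume "j < ?y"
      then have "g (j # xs) \<noteq> 0" by (rule not_less_Least)
      then show "\<exists>v. v \<noteq> 0 \<and> comp_by pg (consc j (list_encode xs)) v"
        using pg[rule_format, of "j # xs"] xs by (auto simp: le_cons)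
    qed
    show "ok_gen comp_by ?p (list_encode xs) ?y 0"
      unfolding ok_gen_def F1 F0 using A B by simp
  qed
  then show ?case by blast
next
  case (ext n f f')
  then show ?case by metis
qed

definition hasC :: "nat \<Rightarrow> nat \<Rightarrow> nat \<Rightarrow> nat \<Rightarrow> nat \<Rightarrow> bool" where
  "hasC c k P A Y \<longleftrightarrow> (\<exists>i<k. nthc (nthc c i) 0 = P \<and> nthc (nthc c i) 1 = A \<and> nthc (nthc c i) 2 = Y)"
definition nzC :: "nat \<Rightarrow> nat \<Rightarrow> nat \<Rightarrow> nat \<Rightarrow> bool" where
  "nzC c k P A \<longleftrightarrow> (\<exists>i<k. nthc (nthc c i) 0 = P \<and> nthc (nthc c i) 1 = A \<and> nthc (nthc c i) 2 \<noteq> 0)"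

definition ok_gen2 :: "(nat \<Rightarrow> nat \<Rightarrow> nat \<Rightarrow> bool) \<Rightarrow> (nat \<Rightarrow> nat \<Rightarrow> bool) \<Rightarrow> nat \<Rightarrow> nat \<Rightarrow> nat \<Rightarrow> nat \<Rightarrow> bool" where
"ok_gen2 R NZ p a y x \<longleftrightarrow>
  (nthc p 0 = 0 \<and> y = 0) \<or>
  (nthc p 0 = 1 \<and> y = Suc (nthc a 0)) \<or>
  (nthc p 0 = 2 \<and> y = nthc a (nthc p 1)) \<or>
  (nthc p 0 = 3 \<and> lenc x = lenc (nthc p 2) \<and>
     (\<forall>j<lenc (nthc p 2). R (nthc (nthc p 2) j) a (nthc x j)) \<and> R (nthc p 1) x y) \<or>
  (nthc p 0 = 4 \<and> lenc x = Suc (nthc a 0) \<and> R (nthc p 1) (tlc a) (nthc x 0) \<and>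
     (\<forall>j<nthc a 0. R (nthc p 2) (consc j (consc (nthc x j) (tlc a))) (nthc x (Suc j))) \<and>
     y = nthc x (nthc a 0)) \<or>
  (nthc p 0 = 5 \<and> R (nthc p 1) (consc y a) 0 \<and> (\<forall>j<y. NZ (nthc p 1) (consc j a)))"

lemma ok_gen2_eq:
  assumes "\<And>P A Y. R P A Y = R' P A Y" "\<And>P A. NZ P A = (\<exists>v. v \<noteq> 0 \<and> R' P A v)"
  shows "ok_gen2 R NZ p a y x = ok_gen R' p a y x"
  unfolding ok_gen2_def ok_gen_def using assms by simp

definition okC :: "nat \<Rightarrow> nat \<Rightarrow> bool" where
  "okC c k = ok_gen2 (hasC c k) (nzC c k) (nthc (nthc c k) 0) (nthc (nthc c k) 1) (nthc (nthc c k) 2) (nthc (nthc c k) 3)"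

definition validC :: "nat \<Rightarrow> bool" where
  "validC c \<longleftrightarrow> (\<forall>k<lenc c. okC c k)"

lemma bex_take: "k \<le> length L \<Longrightarrow> (\<exists>l\<in>set (take k L). Q l) = (\<exists>i<k. Q (L!i))"
proof -
  assume k: "k \<le> length L"
  have "(\<exists>l\<in>set (take k L). Q l) = (\<exists>i<length (take k L). Q (take k L ! i))"
    by (metis in_set_conv_nth)
  also have "\<dots> = (\<exists>i<k. Q (L!i))" using k by (auto simp: min_def)
  finally show ?thesis .
qed

lemma hasC_iff: "k \<le> length L \<Longrightarrow> hasC (list_encode L) k P A Y = has (set (take k L)) P A Y"
  unfolding hasC_def has_def trip_def
  by (subst bex_take) (auto simp: nthc_le)

lemma nzC_iff: "k \<le> length L \<Longrightarrow> nzC (list_encode L) k P A = (\<exists>v. v \<noteq> 0 \<and> has (set (take k L)) P A v)"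
  unfolding nzC_def has_def trip_def
  by (auto simp: nthc_le bex_take) (metis)

lemma validC_iff: "validC (list_encode L) = validA L"
  unfolding validC_def validA_def okC_def okE_def lenc_le
proof (intro iffI allI impI)
  fix k assume A: "\<forall>k<length L. ok_gen2 (hasC (list_encode L) k) (nzC (list_encode L) k)
    (nthc (nthc (list_encode L) k) 0) (nthc (nthc (list_encode L) k) 1) (nthc (nthc (list_encode L) k) 2) (nthc (nthc (list_encode L) k) 3)"
    and k: "k < length L"
  show "ok_gen (has (set (take k L))) (nthc (L ! k) 0) (nthc (L ! k) 1) (nthc (L ! k) 2) (nthc (L ! k) 3)"
    using A[rule_format, OF k] k ok_gen2_eq[OF hasC_iff nzC_iff] by (simp add: nthc_le)
next
  fix k assume A: "\<forall>k<length L. ok_gen (has (set (take k L))) (nthc (L ! k) 0) (nthc (L ! k) 1) (nthc (L ! k) 2) (nthc (L ! k) 3)"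
    and k: "k < length L"
  show "ok_gen2 (hasC (list_encode L) k) (nzC (list_encode L) k)
    (nthc (nthc (list_encode L) k) 0) (nthc (nthc (list_encode L) k) 1) (nthc (nthc (list_encode L) k) 2) (nthc (nthc (list_encode L) k) 3)"
    using A[rule_format, OF k] k ok_gen2_eq[OF hasC_iff nzC_iff] by (simp add: nthc_le)
qed

lemma pred_validC1: "rec_pred X 1 (\<lambda>xs. validC (xs!0))"
  unfolding validC_def okC_def ok_gen2_def hasC_def nzC_def
  by (intro rec_intros code_intros | simp only: drop_drop)+


lemma pred_validC: "rec_in X n c \<Longrightarrow> rec_pred X n (\<lambda>xs. validC (c xs))"
  unfolding rec_pred_def by (rule rec_comp1[OF pred_validC1[unfolded rec_pred_def]])

definition found :: "nat \<Rightarrow> nat \<Rightarrow> nat \<Rightarrow> bool" where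
  "found p a w \<longleftrightarrow> validC (pfst w) \<and> psnd w < lenc (pfst w) \<and>
     nthc (nthc (pfst w) (psnd w)) 0 = p \<and> nthc (nthc (pfst w) (psnd w)) 1 = a"

definition outw :: "nat \<Rightarrow> nat" where
  "outw w = nthc (nthc (pfst w) (psnd w)) 2"

definition ev :: "nat \<Rightarrow> nat \<Rightarrow> nat \<Rightarrow> nat" where
  "ev t p a = (if (LEAST w. found p a w \<or> w = t) < t then Suc (outw (LEAST w. found p a w \<or> w = t)) else 0)"

lemma found_sound: "found p a w \<Longrightarrow> comp_by p a (outw w)"
proof -
  assume f: "found p a w"
  obtain L where L: "pfst w = list_encode L" by (metis list_decode_inverse)
  have V: "validA L" using f L validC_iff by (simp add: found_def)
  have i: "psnd w < length L" using f L by (simp add: found_def)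
  have "comp_by (nthc (L ! psnd w) 0) (nthc (L ! psnd w) 1) (nthc (L ! psnd w) 2)"
    by (rule soundA[OF V]) (use i in simp)
  then show ?thesis using f L i by (simp add: found_def outw_def nthc_le)
qed

lemma found_complete: "comp_by p a y \<Longrightarrow> \<exists>w. found p a w \<and> outw w = y"
proof -
  assume "comp_by p a y"
  then obtain L where L: "validA L" "has (set L) p a y" using completeA by blast
  then obtain i where i: "i < length L" "trip (L!i) = (p, a, y)" by (auto simp: has_def in_set_conv_nth)
  show ?thesis
    by (rule exI[of _ "pe (list_encode L) i"]) (use L i validC_iff in \<open>simp add: found_def outw_def nthc_le trip_def\<close>)
qed

lemma ev_sound: "ev t p a = Suc y \<Longrightarrow> comp_by p a y"
proof -
  assume e: "ev t p a = Suc y"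
  let ?w = "LEAST w. found p a w \<or> w = t"
  have lt: "?w < t" using e by (simp add: ev_def split: if_splits)
  have "found p a ?w \<or> ?w = t" by (rule LeastI[of _ t]) simp
  then have "found p a ?w" using lt by auto
  moreover have "outw ?w = y" using e lt by (simp add: ev_def)
  ultimately show ?thesis using found_sound by blast
qed

lemma ev_complete: "comp_by p a y \<Longrightarrow> \<exists>t0. \<forall>t\<ge>t0. ev t p a = Suc y"
proof -
  assume c: "comp_by p a y"
  then obtain w where w: "found p a w" using found_complete by blast
  have "ev t p a = Suc y" if t: "t \<ge> Suc w" for t
  proof -
    let ?w = "LEAST w. found p a w \<or> w = t"
    have "?w \<le> w" by (rule Least_le) (use w in simp)
    then have lt: "?w < t" using t by simp
    have "found p a ?w \<or> ?w = t" by (rule LeastI[of _ t]) simp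
    then have "found p a ?w" using lt by auto
    then have "comp_by p a (outw ?w)" by (rule found_sound)
    then have "outw ?w = y" using comp_by_det c by blast
    then show ?thesis using lt by (simp add: ev_def)
  qed
  then show ?thesis by blast
qed

lemma ev_mono: "ev t p a = Suc y \<Longrightarrow> t \<le> t' \<Longrightarrow> ev t' p a = Suc y"
proof -
  assume e: "ev t p a = Suc y" and tt: "t \<le> t'"
  have c: "comp_by p a y" using ev_sound[OF e] .
  have lt: "(LEAST w. found p a w \<or> w = t) < t" using e by (simp add: ev_def split: if_splits)
  have "found p a (LEAST w. found p a w \<or> w = t) \<or> (LEAST w. found p a w \<or> w = t) = t"
    by (rule LeastI[of _ t]) simp
  then have fw: "found p a (LEAST w. found p a w \<or> w = t)" using lt by auto
  let ?w = "LEAST w. found p a w \<or> w = t'"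
  have "?w \<le> (LEAST w. found p a w \<or> w = t)" by (rule Least_le) (use fw in simp)
  then have lt': "?w < t'" using lt tt by simp
  have "found p a ?w \<or> ?w = t'" by (rule LeastI[of _ t']) simp
  then have "found p a ?w" using lt' by auto
  then have "comp_by p a (outw ?w)" by (rule found_sound)
  then have "outw ?w = y" using comp_by_det c by blast
  then show ?thesis using lt' by (simp add: ev_def)
qed

lemma rec_ev: "rec_in X n t \<Longrightarrow> rec_in X n p \<Longrightarrow> rec_in X n a \<Longrightarrow> rec_in X n (\<lambda>xs. ev (t xs) (p xs) (a xs))"
proof -
  assume t: "rec_in X n t" and p: "rec_in X n p" and a: "rec_in X n a"
  have 3: "rec_in X 3 (\<lambda>xs. ev (xs!0) (xs!1) (xs!2))"
    unfolding ev_def found_def outw_def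
    apply (intro rec_intros code_intros pred_validC | simp only: drop_drop)+
    apply auto
    done
  have "rec_in X n (\<lambda>xs. (\<lambda>ys. ev (ys!0) (ys!1) (ys!2)) (map (\<lambda>f. f xs) [t, p, a]))"
    by (rule rec_comp_list[OF 3]) (use t p a in \<open>auto simp: less_Suc_eq numeral_3_eq_3\<close>)
  then show ?thesis by simp
qed

lemma rec_lift: "rec_in {} n f \<Longrightarrow> rec_in X n f"
proof (induction rule: rec_in.induct)
  case (char_X) then show ?case by (rule rec_ext[OF rec_in.zero]) simp
next
  case succ then show ?case by (rule rec_in.succ)
next
  case (prim_rec n g h) then show ?case using rec_in.prim_rec[of X n g h] by blast
qed (auto intro: rec_in.intros)

lemma comp_unary: "rec_in {} 1 (\<lambda>xs. f (hd xs)) \<Longrightarrow> \<exists>p. \<forall>x. comp_by p (consc x 0) (f x)"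
proof -
  assume "rec_in {} 1 (\<lambda>xs. f (hd xs))"
  then obtain p where p: "\<forall>xs. length xs = 1 \<longrightarrow> comp_by p (list_encode xs) (f (hd xs))"
    using rep_rec by blast
  have "comp_by p (consc x 0) (f x)" for x using p[rule_format, of "[x]"] by (simp add: le_cons)
  then show ?thesis by blast
qed


lemma computable_in_iff: "computable_in X f \<longleftrightarrow> rec_in X 1 (\<lambda>xs. f (xs!0))"
  unfolding computable_in_def by (auto elim!: rec_ext simp: hd1)

lemma rec_fun: "computable_in X f \<Longrightarrow> rec_in X n a \<Longrightarrow> rec_in X n (\<lambda>xs. f (a xs))"
  unfolding computable_in_iff by (rule rec_comp1)

lemma pred_set: "computable_set_in X A \<Longrightarrow> rec_in X n a \<Longrightarrow> rec_pred X n (\<lambda>xs. a xs \<in> A)"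
  unfolding computable_set_in_def rec_pred_def by (drule rec_fun) auto

lemma enum_rec_nat: "infinite H \<Longrightarrow> enumerate H n = rec_nat (LEAST s. s \<in> H) (\<lambda>y r. LEAST s. s \<in> H \<and> r < s) n"
  by (induction n) (auto simp: enumerate_Suc'' enumerate_0)

lemma comp_enum: "infinite H \<Longrightarrow> computable_set_in X H \<Longrightarrow> computable_in X (enumerate H)"
proof -
  assume inf: "infinite H" and c: "computable_set_in X H"
  have ex: "\<exists>s. s \<in> H \<and> r < s" for r using inf by (meson infinite_nat_iff_unbounded)
  have "rec_in X 1 (\<lambda>xs. rec_nat (LEAST s. s \<in> H) (\<lambda>y r. LEAST s. s \<in> H \<and> r < s) (xs!0))"
    apply (rule rec_prim)
      apply (rule rec_proj, simp)
     apply (rule rec_least)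
      apply (rule pred_set[OF c rec_proj], simp)
     apply (use inf infinite_imp_nonempty in blast)
    apply (rule rec_least)
     apply (intro pred_and pred_set[OF c] rec_intros | simp only: drop_drop)+
    apply (use ex in blast)
    done
  then show ?thesis unfolding computable_in_iff using enum_rec_nat[OF inf] by simp
qed

lemma rec_pow2: "rec_in X n a \<Longrightarrow> rec_in X n (\<lambda>xs. 2 ^ a xs)"
proof -
  assume a: "rec_in X n a"
  have "rec_in X n (\<lambda>xs. rec_nat 1 (\<lambda>y r. r * 2) (a xs))"
    by (rule rec_prim[OF a]) (intro rec_intros | simp only: drop_drop)+
  moreover have "rec_nat 1 (\<lambda>y r. r * 2) k = (2::nat) ^ k" for k by (induction k) auto
  ultimately show ?thesis by simp
qed

lemma div_least: "(b::nat) > 0 \<Longrightarrow> a div b = (LEAST q. b = 0 \<or> a < b * Suc q)"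
proof -
  assume b: "b > 0"
  show ?thesis
  proof (rule Least_equality[symmetric])
    have "a = b * (a div b) + a mod b" by simp
    moreover have "a mod b < b" using b by simp
    ultimately show "b = 0 \<or> a < b * Suc (a div b)" by (simp only: mult_Suc_right) linarith
  next
    fix q assume "b = 0 \<or> a < b * Suc q"
    then have "a < b * Suc q" using b by simp
    then have "a div b < Suc q" using b by (simp add: div_less_iff_less_mult mult.commute)
    then show "a div b \<le> q" by simp
  qed
qed

lemma ex_div: "\<exists>q. (b::nat) = 0 \<or> a < b * Suc q"
  by (rule exI[of _ a]) (cases b, auto)

lemma rec_div: "rec_in X n a \<Longrightarrow> rec_in X n b \<Longrightarrow> rec_in X n (\<lambda>xs. a xs div b xs)"
proof -
  assume a: "rec_in X n a" and b: "rec_in X n b"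
  have 2: "rec_in X 2 (\<lambda>xs. if xs!1 = 0 then 0 else LEAST q. xs!1 = 0 \<or> xs!0 < xs!1 * Suc q)"
    apply (intro rec_intros | simp only: drop_drop)+
    apply (simp only: ex_div)
    done
  have e: "(if y = 0 then 0 else LEAST q. y = 0 \<or> x < y * Suc q) = x div y" for x y :: nat
    using div_least[of y x] by auto
  have 3: "rec_in X 2 (\<lambda>xs. xs!0 div xs!1)" by (rule rec_cong[OF 2]) (simp only: e)
  show ?thesis by (rule rec_comp2[OF 3 a b])
qed

lemma rec_mod: "rec_in X n a \<Longrightarrow> rec_in X n b \<Longrightarrow> rec_in X n (\<lambda>xs. a xs mod b xs)"
  unfolding mod_div_mult_eq[symmetric, of "a _" "b _"] minus_mult_div_eq_mod[symmetric]
  by (intro rec_sub rec_mult rec_div)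


definition stp :: "nat \<Rightarrow> nat \<Rightarrow> nat \<Rightarrow> nat \<Rightarrow> nat" where
  "stp G i m x = rec_nat (pe 0 0)
     (\<lambda>x s. if pfst s < m \<and> ev G i (consc x 0) = Suc 1 then pe (Suc (pfst s)) (psnd s + 2 ^ x) else s) x"

lemma stp_0[simp]: "stp G i m 0 = pe 0 0" by (simp add: stp_def)
lemma stp_Suc: "stp G i m (Suc x) = (if pfst (stp G i m x) < m \<and> ev G i (consc x 0) = Suc 1
   then pe (Suc (pfst (stp G i m x))) (psnd (stp G i m x) + 2 ^ x) else stp G i m x)"
  by (simp add: stp_def)

lemma card_A_Suc: "card {y\<in>R. y < Suc k} = (if k \<in> R then Suc (card {y\<in>R. y < k}) else card {y\<in>R. y < k})"
proof -
  have fin: "finite {y\<in>R. y < k}" by simp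
  show ?thesis
  proof (cases "k \<in> R")
    case True
    then have "{y\<in>R. y < Suc k} = insert k {y\<in>R. y < k}" by auto
    then show ?thesis using True fin by simp
  next
    case False
    then have "{y\<in>R. y < Suc k} = {y\<in>R. y < k}" using less_Suc_eq by auto
    then show ?thesis using False by simp
  qed
qed

lemma encode_A_Suc: "k \<in> R \<Longrightarrow> set_encode {y\<in>R. y < Suc k} = 2 ^ k + set_encode {y\<in>R. y < k}"
proof -
  assume k: "k \<in> R"
  then have "{y\<in>R. y < Suc k} = insert k {y\<in>R. y < k}" by auto
  then show ?thesis by simp
qed

lemma scan_correct:
  assumes ev: "\<And>x. x < K \<Longrightarrow> ev G i (consc x 0) = Suc (if x \<in> R then 1 else 0)"
    and cK: "card {y\<in>R. y < K} = m" and lt: "\<And>k. k < K \<Longrightarrow> card {y\<in>R. y < k} < m"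
    and KG: "K \<le> G"
  shows "stp G i m G = pe m (set_encode {y\<in>R. y < K})"
proof -
  have A: "k \<le> K \<Longrightarrow> stp G i m k = pe (card {y\<in>R. y < k}) (set_encode {y\<in>R. y < k})" for k
  proof (induction k)
    case 0 then show ?case by simp
  next
    case (Suc k)
    then have k: "k < K" by simp
    have IH: "stp G i m k = pe (card {y\<in>R. y < k}) (set_encode {y\<in>R. y < k})" using Suc by simp
    show ?case
    proof (cases "k \<in> R")
      case True
      then show ?thesis using IH ev[OF k] lt[OF k] by (simp add: stp_Suc card_A_Suc encode_A_Suc add.commute)
    next
      case False
      then have "{y\<in>R. y < Suc k} = {y\<in>R. y < k}" using less_Suc_eq by auto
      then show ?thesis using IH ev[OF k] False by (simp add: stp_Suc)
    qed
  qed
  have B: "K \<le> k \<Longrightarrow> stp G i m k = stp G i m K" for k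
  proof (induction k)
    case 0 then show ?case by simp
  next
    case (Suc k)
    show ?case
    proof (cases "K \<le> k")
      case True
      then have "stp G i m k = stp G i m K" using Suc by simp
      then have "pfst (stp G i m k) = m" using A[of K] cK by simp
      then show ?thesis using \<open>stp G i m k = stp G i m K\<close> by (simp add: stp_Suc)
    next
      case False
      then have "K = Suc k" using Suc.prems by simp
      then show ?thesis by simp
    qed
  qed
  show ?thesis using B[OF KG] A[of K] cK by simp
qed

definition cD :: "(nat \<Rightarrow> nat) \<Rightarrow> nat \<Rightarrow> nat" where
  "cD g e = (if e mod 2 = 0 then e div 2 else
     (if pfst (stp (g (psnd (e div 2))) (pfst (e div 2)) (e + 2) (g (psnd (e div 2)))) = e + 2
      then psnd (stp (g (psnd (e div 2))) (pfst (e div 2)) (e + 2) (g (psnd (e div 2)))) else 0))"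

definition Dn :: "(nat \<Rightarrow> nat) \<Rightarrow> nat \<Rightarrow> nat set" where
  "Dn g e = set_decode (cD g e)"

lemma numbering_Dn: "numbering (Dn g)"
  unfolding numbering_def
proof
  show "range (Dn g) \<subseteq> {A. finite A}" by (auto simp: Dn_def)
  show "{A. finite A} \<subseteq> range (Dn g)"
  proof
    fix A :: "nat set" assume "A \<in> {A. finite A}"
    then have "Dn g (2 * set_encode A) = A" by (simp add: Dn_def cD_def)
    then show "A \<in> range (Dn g)" by (metis rangeI)
  qed
qed

lemma canon_eq: "canon = set_encode"
  by (auto simp: canon_def set_encode_def fun_eq_iff)

lemma rec_drop2: "rec_in X n f \<Longrightarrow> rec_in X (Suc (Suc n)) (\<lambda>ys. f (drop 2 ys))"
proof -
  assume f: "rec_in X n f"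
  have "rec_in X (Suc (Suc n)) (\<lambda>ys. f (map (\<lambda>i. ys!i) [2..<Suc (Suc n)]))"
    by (rule rec_rearr[OF f]) auto
  then show ?thesis
  proof (rule rec_ext)
    fix ys :: "nat list" assume "length ys = Suc (Suc n)"
    then show "f (drop 2 ys) = f (map (\<lambda>i. ys!i) [2..<Suc (Suc n)])"
      using map_nth_from[of 2 ys] by simp
  qed
qed

lemma rec_stp: "rec_in X n G \<Longrightarrow> rec_in X n i \<Longrightarrow> rec_in X n m \<Longrightarrow> rec_in X n x \<Longrightarrow>
  rec_in X n (\<lambda>xs. stp (G xs) (i xs) (m xs) (x xs))"
proof -
  assume G: "rec_in X n G" and i: "rec_in X n i" and m: "rec_in X n m" and x: "rec_in X n x"
  note d = rec_drop2[OF G] rec_drop2[OF i] rec_drop2[OF m]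
  show ?thesis
    unfolding stp_def
    apply (rule rec_prim[OF x])
     apply (intro rec_intros code_intros rec_pow2 rec_ev d | simp only: drop_drop)+
    done
qed

lemma rec_cD: "computable_in X g \<Longrightarrow> rec_in X 1 (\<lambda>xs. cD g (xs!0))"
  unfolding cD_def
  apply (intro rec_intros rec_div rec_mod rec_stp rec_pfst rec_psnd rec_fun[of X g] | assumption)+
  apply simp_all
  done

lemma set_decode_mem: "x \<in> set_decode c \<longleftrightarrow> (c div 2 ^ x) mod 2 = 1"
  by (simp add: set_decode_def odd_iff_mod_2_eq_one)

lemma computes_Dn: "computable_in X g \<Longrightarrow> computes_numbering X (Dn g)"
proof -
  assume g: "computable_in X g"
  have 1: "computable_in X (\<lambda>e. canon (Dn g e))"
    unfolding computable_in_iff canon_eq Dn_def using rec_cD[OF g] by simp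
  have 2: "rec_in X 2 (\<lambda>xs. if (cD g (xs!0) div 2 ^ (xs!1)) mod 2 = 1 then 1 else 0)"
    by (intro rec_intros rec_div rec_mod rec_pow2 rec_comp1[OF rec_cD[OF g]] | simp)+
  then have "computable_rel_in X (\<lambda>e x. x \<in> Dn g e)"
    unfolding computable_rel_in_def Dn_def set_decode_mem .
  then show ?thesis using 1 by (simp add: computes_numbering_def)
qed


lemma card_sum: "card {y\<in>(R::nat set). y < (k::nat)} = (\<Sum>y<k. if y \<in> R then 1 else 0)"
  by (induction k) (simp_all add: card_A_Suc)

lemma exK: "infinite (R::nat set) \<Longrightarrow> \<exists>k. M \<le> card {y\<in>R. y < k}"
proof -
  assume inf: "infinite R"
  obtain B where B: "B \<subseteq> R" "finite B" "card B = M" using infinite_arbitrarily_large[OF inf] by blast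
  have "B \<subseteq> {y\<in>R. y < Suc (Max (insert 0 B))}"
    using B by (auto simp: le_imp_less_Suc)
  then have "card B \<le> card {y\<in>R. y < Suc (Max (insert 0 B))}" by (intro card_mono) auto
  then show ?thesis using B by blast
qed

lemma exT: "(\<And>x. \<exists>y. comp_by p (consc x 0) y) \<Longrightarrow> \<exists>t. \<forall>x<K. ev t p (consc x 0) \<noteq> 0"
proof (induction K)
  case 0 then show ?case by simp
next
  case (Suc K)
  then obtain t where t: "\<forall>x<K. ev t p (consc x 0) \<noteq> 0" by blast
  obtain y where "comp_by p (consc K 0) y" using Suc.prems by blast
  then obtain t0 where t0: "\<forall>t\<ge>t0. ev t p (consc K 0) = Suc y" using ev_complete by blast
  have "\<forall>x<Suc K. ev (max t t0) p (consc x 0) \<noteq> 0"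
  proof (intro allI impI)
    fix x assume "x < Suc K"
    then consider "x < K" | "x = K" by linarith
    then show "ev (max t t0) p (consc x 0) \<noteq> 0"
    proof cases
      case 1
      then obtain z where "ev t p (consc x 0) = Suc z" using t not0_implies_Suc by blast
      then show ?thesis using ev_mono[of t p "consc x 0" z "max t t0"] by simp
    next
      case 2 then show ?thesis using t0 by simp
    qed
  qed
  then show ?case by blast
qed

lemma order_h: "order_function (\<lambda>e. e + 2)"
proof -
  have "recursive_fun (\<lambda>e. e + 2)"
    unfolding recursive_fun_def computable_in_iff by (intro rec_intros) simp
  moreover have "mono (\<lambda>e::nat. e + 2)" by (auto simp: mono_def)
  moreover have "\<forall>k. \<exists>n. k < n + (2::nat)"
  proof
    fix k :: nat show "\<exists>n. k < n + 2" by (rule exI[of _ k]) simp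
  qed
  ultimately show ?thesis by (simp add: order_function_def)
qed

lemma endemic_Dn:
  assumes cg: "computable_in X g" and hyp: "\<And>f. recursive_fun f \<Longrightarrow> \<not> dominates f g"
    and inf: "infinite R" and rR: "recursive_set R"
  shows "endemic (\<lambda>e. e + 2) (Dn g) R"
proof -
  have cR: "computable_set_in {} R" using rR by (simp add: recursive_set_def)
  then have "rec_in {} 1 (\<lambda>xs. (\<lambda>x. if x \<in> R then 1 else 0) (hd xs))"
    by (simp add: computable_set_in_def computable_in_def)
  from comp_unary[of "\<lambda>x. if x \<in> R then 1 else 0", OF this]
  obtain pR where pR: "\<And>x. comp_by pR (consc x 0) (if x \<in> R then 1 else 0)"
    by blast
  define m where "m n = 2 * pe pR n + 3" for n
  define K where "K n = (LEAST k. m n \<le> card {y\<in>R. y < k})" for n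
  define T where "T n = (LEAST t. \<forall>x<K n. ev t pR (consc x 0) \<noteq> 0)" for n
  define F where "F n = K n + T n" for n
  have K1: "m n \<le> card {y\<in>R. y < K n}" for n
    unfolding K_def by (rule LeastI_ex) (rule exK[OF inf])
  have K2: "k < K n \<Longrightarrow> card {y\<in>R. y < k} < m n" for k n
    unfolding K_def using not_less_Least by (metis not_le)
  have K3: "card {y\<in>R. y < K n} = m n" for n
  proof -
    have "K n \<noteq> 0"
    proof
      assume "K n = 0"
      then show False using K1[of n] by (simp add: m_def)
    qed
    then obtain k where k: "K n = Suc k" by (metis not0_implies_Suc)
    then have "card {y\<in>R. y < k} < m n" using K2 by simp
    then show ?thesis using K1[of n] k card_A_Suc[of R k] by (auto split: if_splits)
  qed
  have T1: "\<forall>x<K n. ev (T n) pR (consc x 0) \<noteq> 0" for n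
    unfolding T_def by (rule LeastI_ex) (rule exT, use pR in blast)
  have exK': "\<And>M::nat. \<exists>k. M \<le> (\<Sum>y<k. if y \<in> R then 1 else 0)"
    using exK[OF inf] by (simp add: card_sum)
  have exT': "\<And>K. \<exists>t. \<forall>x<K. 0 < ev t pR (consc x 0)"
    using exT[of pR] pR by blast
  have recF: "recursive_fun F"
  proof -
    have "rec_in {} 1 (\<lambda>xs. (LEAST k. 2 * pe pR (xs!0) + 3 \<le> (\<Sum>y<k. if y \<in> R then 1 else 0)) +
       (LEAST t. \<forall>x<(LEAST k. 2 * pe pR (xs!0) + 3 \<le> (\<Sum>y<k. if y \<in> R then 1 else 0)).
            ev t pR (consc x 0) \<noteq> 0))"
      apply (intro rec_intros code_intros rec_ev pred_set[OF cR] | simp only: drop_drop)+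
        apply (simp_all add: exK' exT')
      apply (rule rec_proj_drop, simp)
      done
    then show ?thesis
      unfolding recursive_fun_def computable_in_iff F_def T_def K_def m_def card_sum .
  qed
  have inf_set: "\<exists>e\<ge>N. e \<in> {e. e + 2 \<le> card (Dn g e) \<and> Dn g e \<subseteq> R}" for N
  proof -
    have "\<not> dominates F g" using hyp recF by blast
    then obtain n where n: "n \<ge> N" "g n > F n" unfolding dominates_def by (meson not_le)
    define e where "e = 2 * pe pR n + 1"
    have ediv: "e div 2 = pe pR n" "e mod 2 = 1" by (simp_all add: e_def)
    have me: "e + 2 = m n" by (simp add: e_def m_def)
    have evx: "ev (g n) pR (consc x 0) = Suc (if x \<in> R then 1 else 0)" if x: "x < K n" for x
    proof -
      obtain z where z: "ev (T n) pR (consc x 0) = Suc z" using T1 x not0_implies_Suc by blast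
      then have "comp_by pR (consc x 0) z" by (rule ev_sound)
      then have "z = (if x \<in> R then 1 else 0)" using pR comp_by_det by blast
      moreover have "ev (g n) pR (consc x 0) = Suc z" by (rule ev_mono[OF z]) (use n in \<open>simp add: F_def\<close>)
      ultimately show ?thesis by simp
    qed
    have sc: "stp (g n) pR (m n) (g n) = pe (m n) (set_encode {y\<in>R. y < K n})"
      by (rule scan_correct[OF evx K3 K2]) (use n in \<open>simp_all add: F_def\<close>)
    have "Dn g e = {y\<in>R. y < K n}"
      unfolding Dn_def cD_def using ediv me sc by simp
    then have "e \<in> {e. e + 2 \<le> card (Dn g e) \<and> Dn g e \<subseteq> R}" using K3 me by auto
    moreover have "e \<ge> N" using n le_prod_encode_2[of n pR] by (simp add: e_def pe_def)
    ultimately show ?thesis by blast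
  qed
  show ?thesis unfolding endemic_def infinite_nat_iff_unbounded_le using inf_set by blast
qed

theorem hyper_to_pandemic:
  assumes "computable_set_in X H" "hyperimmune H"
  shows "\<exists>D. numbering D \<and> computes_numbering X D \<and> pandemic D"
proof -
  have inf: "infinite H" and hyp: "\<And>f. recursive_fun f \<Longrightarrow> \<not> dominates f (enumerate H)"
    using assms(2) by (auto simp: hyperimmune_def)
  have cg: "computable_in X (enumerate H)" by (rule comp_enum[OF inf assms(1)])
  have "pandemic (Dn (enumerate H))"
    unfolding pandemic_def using order_h endemic_Dn[OF cg hyp] by blast
  then show ?thesis using numbering_Dn computes_Dn[OF cg] by blast
qed


lemma strict_mono_ge: "strict_mono (s::nat \<Rightarrow> nat) \<Longrightarrow> n \<le> s n"
  by (rule strict_mono_imp_increasing)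

lemma range_set_comp:
  assumes sm: "strict_mono s" and c: "computable_in Y s"
  shows "computable_set_in Y (range s)"
proof -
  have eq: "(x \<in> range s) = (\<exists>n<Suc x. s n = x)" for x
  proof
    assume "x \<in> range s" then obtain n where "x = s n" by auto
    then show "\<exists>n<Suc x. s n = x" using strict_mono_ge[OF sm, of n] by (intro exI[of _ n]) auto
  qed auto
  have "rec_in Y 1 (\<lambda>xs. if \<exists>n<Suc (xs!0). s n = xs!0 then 1 else 0)"
    by (intro rec_intros rec_fun[OF c] | simp only: drop_drop)+
  then show ?thesis unfolding computable_set_in_def computable_in_iff eq .
qed

lemma inf_range: "strict_mono (s::nat \<Rightarrow> nat) \<Longrightarrow> infinite (range s)"
proof
  assume sm: "strict_mono s" and f: "finite (range s)"
  have "inj s" using sm by (rule strict_mono_imp_inj_on)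
  then have "finite (UNIV :: nat set)" using f finite_imageD by blast
  then show False by simp
qed

lemma enumerate_range: "strict_mono (s::nat \<Rightarrow> nat) \<Longrightarrow> enumerate (range s) n = s n"
proof (induction n)
  case 0
  have "(LEAST x. x \<in> range s) = s 0"
  proof (rule Least_equality)
    show "s 0 \<in> range s" by simp
  next
    fix y assume "y \<in> range s"
    then obtain j where "y = s j" by auto
    then show "s 0 \<le> y" using 0 strict_mono_less_eq[of s 0 j] by simp
  qed
  then show ?case by (simp add: enumerate_0)
next
  case (Suc n)
  have inf: "infinite (range s)" using Suc.prems by (rule inf_range)
  have "(LEAST t. t \<in> range s \<and> s n < t) = s (Suc n)"
  proof (rule Least_equality)
    show "s (Suc n) \<in> range s \<and> s n < s (Suc n)" using Suc.prems by (simp add: strict_mono_def)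
  next
    fix y assume "y \<in> range s \<and> s n < y"
    then obtain j where j: "y = s j" "s n < s j" by auto
    then have "n < j" using Suc.prems strict_mono_less by blast
    then have "Suc n \<le> j" by simp
    then show "s (Suc n) \<le> y" using j Suc.prems strict_mono_less_eq by blast
  qed
  then show ?case using Suc enumerate_Suc''[OF inf, of n] by simp
qed

lemma strict_mono_step: "(\<And>n. (s::nat \<Rightarrow> nat) n < s (Suc n)) \<Longrightarrow> strict_mono s"
  by (simp add: strict_mono_Suc_iff)

definition mx :: "(nat \<Rightarrow> nat) \<Rightarrow> nat \<Rightarrow> nat" where
  "mx f n = rec_nat (f 0) (\<lambda>y r. max r (f (Suc y))) n"

lemma mx_0[simp]: "mx f 0 = f 0" by (simp add: mx_def)
lemma mx_Suc[simp]: "mx f (Suc n) = max (mx f n) (f (Suc n))" by (simp add: mx_def)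

lemma mx_ge: "j \<le> n \<Longrightarrow> f j \<le> mx f n"
proof (induction n)
  case 0 then show ?case by simp
next
  case (Suc n)
  show ?case
  proof (cases "j = Suc n")
    case True then show ?thesis by simp
  next
    case False then have "j \<le> n" using Suc.prems by simp
    then have "f j \<le> mx f n" by (rule Suc.IH)
    then show ?thesis by simp
  qed
qed

lemma mx_mono: "m \<le> n \<Longrightarrow> mx f m \<le> mx f n"
proof (induction n)
  case 0 then show ?case by simp
next
  case (Suc n)
  show ?case
  proof (cases "m = Suc n")
    case True then show ?thesis by simp
  next
    case False then have "m \<le> n" using Suc.prems by simp
    then have "mx f m \<le> mx f n" by (rule Suc.IH)
    then show ?thesis by simp
  qed
qed

lemma comp_mx: assumes c: "computable_in Y f" shows "computable_in Y (mx f)"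
  unfolding computable_in_iff mx_def
  by (rule rec_prim) (intro rec_intros rec_max rec_fun[OF c] | simp only: drop_drop)+


lemma canon_ge: "finite A \<Longrightarrow> M \<in> A \<Longrightarrow> 2 ^ M \<le> canon A"
  unfolding canon_def by (rule member_le_sum) auto

lemma dominated_case:
  assumes numD: "numbering D" and h: "order_function h"
    and f: "recursive_fun f" and dom: "\<forall>n\<ge>N. mx (\<lambda>e. canon (D e)) n \<le> f n"
  shows "\<exists>R. infinite R \<and> recursive_set R \<and> \<not> endemic h D R"
proof -
  have ch: "computable_in {} h" and hmono: "mono h" and hunb: "\<forall>k. \<exists>n. k < h n" and h0: "2 \<le> h 0"
    using h by (auto simp: order_function_def recursive_fun_def)
  have cf: "computable_in {} f" using f by (simp add: recursive_fun_def)
  define f' where "f' = mx f"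
  have cf': "computable_in {} f'" unfolding f'_def by (rule comp_mx[OF cf])
  define b where "b k = (LEAST b. k + 2 < h b)" for k
  have b1: "k + 2 < h (b k)" for k unfolding b_def by (rule LeastI_ex) (use hunb in blast)
  define a where "a k = rec_nat 0 (\<lambda>y r. r + f' (b y) + 1) k" for k
  have aS: "a (Suc k) = a k + f' (b k) + 1" for k by (simp add: a_def)
  have sm: "strict_mono a" by (rule strict_mono_step) (simp add: aS)
  have ca: "computable_in {} a"
  proof -
    have "rec_in {} 1 (\<lambda>xs. rec_nat 0 (\<lambda>y r. r + f' (LEAST b. y + 2 < h b) + 1) (xs!0))"
      apply (rule rec_prim)
        apply (intro rec_intros rec_fun[OF cf'] rec_fun[OF ch] | simp only: drop_drop)+
        apply simp_all
      using hunb by metis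
    then show ?thesis unfolding computable_in_iff a_def b_def .
  qed
  define R where "R = range a"
  have infR: "infinite R" unfolding R_def by (rule inf_range[OF sm])
  have recR: "recursive_set R" unfolding R_def recursive_set_def by (rule range_set_comp[OF sm ca])
  have small: "e < N" if e: "h e \<le> card (D e)" "D e \<subseteq> R" for e
  proof (rule ccontr)
    assume "\<not> e < N" then have eN: "e \<ge> N" by simp
    have fin: "finite (D e)" using numD unfolding numbering_def by blast
    have "h 0 \<le> h e" using hmono by (simp add: mono_def)
    then have c2: "2 \<le> card (D e)" using h0 e by simp
    then have ne: "D e \<noteq> {}" by auto
    define M where "M = Max (D e)"
    have MD: "M \<in> D e" unfolding M_def using fin ne by simp
    then obtain k where k: "M = a k" using e R_def by auto
    have sub: "D e \<subseteq> a ` {..k}"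
    proof
      fix y assume y: "y \<in> D e"
      then obtain j where j: "y = a j" using e R_def by auto
      have "y \<le> M" unfolding M_def using fin y by simp
      then have "j \<le> k" using j k sm strict_mono_less_eq by blast
      then show "y \<in> a ` {..k}" using j by auto
    qed
    have "card (D e) \<le> card (a ` {..k})" by (rule card_mono[OF _ sub]) simp
    also have "\<dots> \<le> Suc k" using card_image_le[of "{..k}" a] by simp
    finally have ck: "card (D e) \<le> Suc k" .
    then obtain k' where k': "k = Suc k'" using c2 by (cases k) auto
    have "h e < h (b k')" using b1[of k'] ck e k' by simp
    then have ebk: "e \<le> b k'" using hmono by (metis monoD not_le less_le_not_le)
    have "M < 2 ^ M" by simp
    also have "2 ^ M \<le> canon (D e)" by (rule canon_ge[OF fin MD])
    also have "\<dots> \<le> mx (\<lambda>e. canon (D e)) e" by (rule mx_ge[where f="\<lambda>e. canon (D e)"]) simp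
    also have "\<dots> \<le> f e" using dom eN by simp
    also have "\<dots> \<le> f' e" unfolding f'_def by (rule mx_ge) simp
    also have "\<dots> \<le> f' (b k')" unfolding f'_def by (rule mx_mono[OF ebk])
    also have "\<dots> < a (Suc k')" by (simp add: aS)
    finally show False using k k' by simp
  qed
  have "{e. h e \<le> card (D e) \<and> D e \<subseteq> R} \<subseteq> {..<N}" using small by auto
  then have "finite {e. h e \<le> card (D e) \<and> D e \<subseteq> R}" by (rule finite_subset) simp
  then have "\<not> endemic h D R" by (simp add: endemic_def)
  then show ?thesis using infR recR by blast
qed

theorem pandemic_to_hyper:
  assumes numD: "numbering D" and cD: "computes_numbering X D" and pD: "pandemic D"
  shows "\<exists>H. computable_set_in X H \<and> hyperimmune H"
proof -
  obtain h where h: "order_function h" and en: "\<And>R. infinite R \<Longrightarrow> recursive_set R \<Longrightarrow> endemic h D R"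
    using pD unfolding pandemic_def by blast
  have ccd: "computable_in X (\<lambda>e. canon (D e))" using cD by (simp add: computes_numbering_def)
  define q where "q = mx (\<lambda>e. canon (D e))"
  have cq: "computable_in X q" unfolding q_def by (rule comp_mx[OF ccd])
  have nodom: "\<not> dominates f q" if f: "recursive_fun f" for f
  proof
    assume "dominates f q"
    then obtain N where N: "\<forall>n\<ge>N. q n \<le> f n" by (auto simp: dominates_def)
    then obtain R where "infinite R" "recursive_set R" "\<not> endemic h D R"
      using dominated_case[OF numD h f] unfolding q_def by blast
    then show False using en by blast
  qed
  define s where "s n = rec_nat (q 0) (\<lambda>y r. r + q (Suc y) + 1) n" for n
  have sS: "s (Suc n) = s n + q (Suc n) + 1" for n by (simp add: s_def)
  have sm: "strict_mono s" by (rule strict_mono_step) (simp add: sS)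
  have sq: "q n \<le> s n" for n by (cases n) (simp_all add: s_def)
  have cs: "computable_in X s"
  proof -
    have "rec_in X 1 (\<lambda>xs. rec_nat (q 0) (\<lambda>y r. r + q (Suc y) + 1) (xs!0))"
      by (rule rec_prim) (intro rec_intros rec_fun[OF cq] | simp only: drop_drop)+
    then show ?thesis unfolding computable_in_iff s_def .
  qed
  have es: "enumerate (range s) = s" using enumerate_range[OF sm] by (simp add: fun_eq_iff)
  have "hyperimmune (range s)"
    unfolding hyperimmune_def
  proof (intro conjI)
    show "infinite (range s)" by (rule inf_range[OF sm])
  next
    show "\<not> (\<exists>f. recursive_fun f \<and> dominates f (enumerate (range s)))"
    proof
    assume "\<exists>f. recursive_fun f \<and> dominates f (enumerate (range s))"
    with es obtain f where f: "recursive_fun f" "dominates f s" by auto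
    then have "dominates f q" unfolding dominates_def using sq le_trans by blast
    then show False using nodom f by blast
    qed
  qed
  then show ?thesis using range_set_comp[OF sm cs] by blast
qed


theorem mainTheorem14:
  fixes X :: "nat set"
  shows "(\<exists>D. numbering D \<and> computes_numbering X D \<and> pandemic D) \<longleftrightarrow>
         (\<exists>H. computable_set_in X H \<and> hyperimmune H)"
proof
  assume "\<exists>D. numbering D \<and> computes_numbering X D \<and> pandemic D"
  then obtain D where "numbering D" "computes_numbering X D" "pandemic D" by blast
  then show "\<exists>H. computable_set_in X H \<and> hyperimmune H" by (rule pandemic_to_hyper)
next
  assume "\<exists>H. computable_set_in X H \<and> hyperimmune H"
  then obtain H where "computable_set_in X H" "hyperimmune H" by blast
  then show "\<exists>D. numbering D \<and> computes_numbering X D \<and> pandemic D" by (rule hyper_to_pandemic)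
qed

end
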